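(* Let $\mathfrak v$ be an exact colinked chain with finite cosupport. Then the subset $\mathbb{LP}(\mathfrak v)^*\subseteq\mathbb{LP}(\mathfrak v)$ parameterizing exact subrepresentations is open and dense in $\mathbb{LP}(\mathfrak v)$.
   Context: Let $k$ be a field. $\mathcal Z$ is the quiver with vertex set $\mathbb Z$ and arrows $\alpha^i\colon i\to i+1$, $\alpha_i\colon i+1\to i$ ($i\in\mathbb Z$). A representation $\mathfrak{v}=(V_i,v_i,v^i)$ has finite-dimensional $k$-spaces $V_i$ and maps $v^i\colon V_i\to V_{i+1}$, $v_i\colon V_{i+1}\to V_i$; compositions $v^i_j$ are $v^{j-1}\circ\cdots\circ v^i$ ($j>i$), $v_j\circ\cdots\circ v_{i-1}$ ($j<i$), identity ($j=i$). A colinked chain satisfies $v_iv^i=0$, $v^iv_i=0$ and $\mathrm{Im}(v_i)+\mathrm{Im}(v^{i-1})=V_i$ for all $i$. A representation is exact if $\ker(v^i)=\mathrm{Im}(v_i)$ and $\ker(v_i)=\mathrm{Im}(v^i)$ for all $i$. A cosupport is $H\subseteq\mathbb Z$ such that for each $i$ there is $j\in H$ with $v^i_j$ injective. $\mathbb{LP}(\mathfrak{v})$ is the set of subrepresentations $\mathfrak w=(W_i)$ (with the restricted maps) with every $W_i\subseteq V_i$ one-dimensional, $v^i(W_i)\subseteq W_{i+1}$, $v_i(W_{i+1})\subseteq W_i$, given the scheme structure of the closed subscheme of $\prod_{i\in H}\mathbb P(V_i)$, for any finite interval cosupport $H$, defined by $v^i_j(x_i)\wedge x_j=0$ for $i,j\in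 H$. *)

theory Defs
  imports "HOL-Algebra.Algebraic_Closure_Type"
begin

(* A representation of the quiver Z over a field 'a is given by
   dims d i = dim V_i, with V_i = coordinate space of column vectors of length d i,
   encoded as functions nat => 'a vanishing from index d i on;
   U i = matrix of v^i : V_i -> V_(i+1)  (d(i+1) x d i),
   D i = matrix of v_i : V_(i+1) -> V_i  (d i x d(i+1)). *)

definition cspace :: "(int \<Rightarrow> nat) \<Rightarrow> int \<Rightarrow> (nat \<Rightarrow> 'a::field) set" where
  "cspace d i = {x. \<forall>n\<ge>d i. x n = 0}"

definition mat_apply :: "(nat \<Rightarrow> nat \<Rightarrow> 'a::field) \<Rightarrow> nat \<Rightarrow> nat \<Rightarrow> (nat \<Rightarrow> 'a) \<Rightarrow> (nat \<Rightarrow> 'a)" where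
  "mat_apply M src tgt x = (\<lambda>r. if r < tgt then (\<Sum>c<src. M r c * x c) else 0)"

definition up_map :: "(int \<Rightarrow> nat) \<Rightarrow> (int \<Rightarrow> nat \<Rightarrow> nat \<Rightarrow> 'a::field) \<Rightarrow> int \<Rightarrow> (nat \<Rightarrow> 'a) \<Rightarrow> (nat \<Rightarrow> 'a)" where
  "up_map d U i = mat_apply (U i) (d i) (d (i + 1))"

definition down_map :: "(int \<Rightarrow> nat) \<Rightarrow> (int \<Rightarrow> nat \<Rightarrow> nat \<Rightarrow> 'a::field) \<Rightarrow> int \<Rightarrow> (nat \<Rightarrow> 'a) \<Rightarrow> (nat \<Rightarrow> 'a)" where
  "down_map d D i = mat_apply (D i) (d (i + 1)) (d i)"

fun ups :: "(int \<Rightarrow> nat) \<Rightarrow> (int \<Rightarrow> nat \<Rightarrow> nat \<Rightarrow> 'a::field) \<Rightarrow> int \<Rightarrow> nat \<Rightarrow> (nat \<Rightarrow> 'a) \<Rightarrow> (nat \<Rightarrow> 'a)" where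
  "ups d U i 0 x = x"
| "ups d U i (Suc k) x = up_map d U (i + int k) (ups d U i k x)"

fun downs :: "(int \<Rightarrow> nat) \<Rightarrow> (int \<Rightarrow> nat \<Rightarrow> nat \<Rightarrow> 'a::field) \<Rightarrow> int \<Rightarrow> nat \<Rightarrow> (nat \<Rightarrow> 'a) \<Rightarrow> (nat \<Rightarrow> 'a)" where
  "downs d D i 0 x = x"
| "downs d D i (Suc k) x = down_map d D (i - int k - 1) (downs d D i k x)"

definition comp_map :: "(int \<Rightarrow> nat) \<Rightarrow> (int \<Rightarrow> nat \<Rightarrow> nat \<Rightarrow> 'a::field) \<Rightarrow> (int \<Rightarrow> nat \<Rightarrow> nat \<Rightarrow> 'a)
    \<Rightarrow> int \<Rightarrow> int \<Rightarrow> (nat \<Rightarrow> 'a) \<Rightarrow> (nat \<Rightarrow> 'a)" where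
  "comp_map d U D i j = (if i \<le> j then ups d U i (nat (j - i)) else downs d D i (nat (i - j)))"

definition colinked_chain :: "(int \<Rightarrow> nat) \<Rightarrow> (int \<Rightarrow> nat \<Rightarrow> nat \<Rightarrow> 'a::field) \<Rightarrow> (int \<Rightarrow> nat \<Rightarrow> nat \<Rightarrow> 'a) \<Rightarrow> bool" where
  "colinked_chain d U D \<longleftrightarrow>
     (\<forall>i. (\<forall>x\<in>cspace d i. down_map d D i (up_map d U i x) = (\<lambda>n. 0))
        \<and> (\<forall>y\<in>cspace d (i + 1). up_map d U i (down_map d D i y) = (\<lambda>n. 0))
        \<and> (\<forall>z\<in>cspace d i. \<exists>y\<in>cspace d (i + 1). \<exists>u\<in>cspace d (i - 1).
              z = (\<lambda>n. down_map d D i y n + up_map d U (i - 1) u n)))"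

definition exact_on :: "(int \<Rightarrow> (nat \<Rightarrow> 'a::field) set) \<Rightarrow> (int \<Rightarrow> (nat \<Rightarrow> 'a) \<Rightarrow> (nat \<Rightarrow> 'a))
    \<Rightarrow> (int \<Rightarrow> (nat \<Rightarrow> 'a) \<Rightarrow> (nat \<Rightarrow> 'a)) \<Rightarrow> bool" where
  "exact_on W upm dn \<longleftrightarrow>
     (\<forall>i. {x\<in>W i. upm i x = (\<lambda>n. 0)} = dn i ` W (i + 1) \<and> {y\<in>W (i + 1). dn i y = (\<lambda>n. 0)} = upm i ` W i)"

definition exact_rep :: "(int \<Rightarrow> nat) \<Rightarrow> (int \<Rightarrow> nat \<Rightarrow> nat \<Rightarrow> 'a::field) \<Rightarrow> (int \<Rightarrow> nat \<Rightarrow> nat \<Rightarrow> 'a) \<Rightarrow> bool" where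
  "exact_rep d U D \<longleftrightarrow> exact_on (cspace d) (up_map d U) (down_map d D)"

definition is_cosupport :: "(int \<Rightarrow> nat) \<Rightarrow> (int \<Rightarrow> nat \<Rightarrow> nat \<Rightarrow> 'a::field) \<Rightarrow> (int \<Rightarrow> nat \<Rightarrow> nat \<Rightarrow> 'a) \<Rightarrow> int set \<Rightarrow> bool" where
  "is_cosupport d U D H \<longleftrightarrow> (\<forall>i. \<exists>j\<in>H. inj_on (comp_map d U D i j) (cspace d i))"

definition finite_interval :: "int set \<Rightarrow> bool" where
  "finite_interval H \<longleftrightarrow> (\<exists>a b. H = {a..b})"

definition is_line :: "(int \<Rightarrow> nat) \<Rightarrow> int \<Rightarrow> (nat \<Rightarrow> 'a::field) set \<Rightarrow> bool" where
  "is_line d i L \<longleftrightarrow> (\<exists>x\<in>cspace d i. x \<noteq> (\<lambda>n. 0) \<and> L = {(\<lambda>n. c * x n) | c. True})"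

definition LP :: "(int \<Rightarrow> nat) \<Rightarrow> (int \<Rightarrow> nat \<Rightarrow> nat \<Rightarrow> 'a::field) \<Rightarrow> (int \<Rightarrow> nat \<Rightarrow> nat \<Rightarrow> 'a)
    \<Rightarrow> (int \<Rightarrow> (nat \<Rightarrow> 'a) set) set" where
  "LP d U D = {W. \<forall>i. is_line d i (W i) \<and> up_map d U i ` W i \<subseteq> W (i + 1)
                   \<and> down_map d D i ` W (i + 1) \<subseteq> W i}"

definition LP_exact :: "(int \<Rightarrow> nat) \<Rightarrow> (int \<Rightarrow> nat \<Rightarrow> nat \<Rightarrow> 'a::field) \<Rightarrow> (int \<Rightarrow> nat \<Rightarrow> nat \<Rightarrow> 'a)
    \<Rightarrow> (int \<Rightarrow> (nat \<Rightarrow> 'a) set) set" where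
  "LP_exact d U D = {W \<in> LP d U D. exact_on W (up_map d U) (down_map d D)}"

(* polynomial functions in the coordinates x i n  (i \<in> H, n < d i) of \<Prod>_{i\<in>H} V_i *)
inductive_set polyfun :: "int set \<Rightarrow> (int \<Rightarrow> nat) \<Rightarrow> ((int \<Rightarrow> nat \<Rightarrow> 'a::field) \<Rightarrow> 'a) set"
  for H d where
  pf_const: "(\<lambda>x. c) \<in> polyfun H d"
| pf_var: "i \<in> H \<Longrightarrow> n < d i \<Longrightarrow> (\<lambda>x. x i n) \<in> polyfun H d"
| pf_add: "f \<in> polyfun H d \<Longrightarrow> g \<in> polyfun H d \<Longrightarrow> (\<lambda>x. f x + g x) \<in> polyfun H d"
| pf_mult: "f \<in> polyfun H d \<Longrightarrow> g \<in> polyfun H d \<Longrightarrow> (\<lambda>x. f x * g x) \<in> polyfun H d"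

(* multihomogeneous polynomial functions (over an infinite field these are exactly the
   functions of multihomogeneous polynomials) *)
definition multihom :: "int set \<Rightarrow> (int \<Rightarrow> nat) \<Rightarrow> ((int \<Rightarrow> nat \<Rightarrow> 'a::field) \<Rightarrow> 'a) \<Rightarrow> bool" where
  "multihom H d f \<longleftrightarrow> f \<in> polyfun H d \<and>
     (\<exists>e :: int \<Rightarrow> nat. \<forall>x (t :: int \<Rightarrow> 'a). (\<forall>i\<in>H. t i \<noteq> 0) \<longrightarrow>
         f (\<lambda>i n. t i * x i n) = (\<Prod>i\<in>H. t i ^ e i) * f x)"

(* Zariski-closed subsets of a set P of families of lines, for the topology induced by
   the embedding W \<mapsto> (W i)_{i\<in>H} into \<Prod>_{i\<in>H} P(V_i) *)
definition zariski_closed_in :: "int set \<Rightarrow> (int \<Rightarrow> nat) \<Rightarrow> (int \<Rightarrow> (nat \<Rightarrow> 'a::field) set) set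
    \<Rightarrow> (int \<Rightarrow> (nat \<Rightarrow> 'a) set) set \<Rightarrow> bool" where
  "zariski_closed_in H d P C \<longleftrightarrow>
     (\<exists>F. (\<forall>f\<in>F. multihom H d f) \<and>
          C = {W\<in>P. \<forall>f\<in>F. \<forall>x. (\<forall>i\<in>H. x i \<in> W i \<and> x i \<noteq> (\<lambda>n. 0)) \<longrightarrow> f x = 0})"

definition zariski_open_in :: "int set \<Rightarrow> (int \<Rightarrow> nat) \<Rightarrow> (int \<Rightarrow> (nat \<Rightarrow> 'a::field) set) set
    \<Rightarrow> (int \<Rightarrow> (nat \<Rightarrow> 'a) set) set \<Rightarrow> bool" where
  "zariski_open_in H d P S \<longleftrightarrow> S \<subseteq> P \<and> zariski_closed_in H d P (P - S)"

definition zariski_dense_in :: "int set \<Rightarrow> (int \<Rightarrow> nat) \<Rightarrow> (int \<Rightarrow> (nat \<Rightarrow> 'a::field) set) set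
    \<Rightarrow> (int \<Rightarrow> (nat \<Rightarrow> 'a) set) set \<Rightarrow> bool" where
  "zariski_dense_in H d P S \<longleftrightarrow> (\<forall>C. zariski_closed_in H d P C \<and> S \<subseteq> C \<longrightarrow> C = P)"

definition base_change :: "(int \<Rightarrow> nat \<Rightarrow> nat \<Rightarrow> 'a::field) \<Rightarrow> (int \<Rightarrow> nat \<Rightarrow> nat \<Rightarrow> 'a alg_closure)" where
  "base_change M = (\<lambda>i r c. to_ac (M i r c))"

end

theory Submission
  imports Defs "HOL-Library.Function_Algebras"
begin


definition csp :: "nat \<Rightarrow> (nat \<Rightarrow> 'a::field) set" where
  "csp n = {x. \<forall>m\<ge>n. x m = 0}"

lemma cspace_csp: "cspace d i = csp (d i)"
  by (simp add: cspace_def csp_def)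

definition fscale :: "'a::field \<Rightarrow> (nat \<Rightarrow> 'a) \<Rightarrow> (nat \<Rightarrow> 'a)" where
  "fscale c x = (\<lambda>n. c * x n)"

interpretation fvs: vector_space "fscale :: 'a::field \<Rightarrow> _"
  by unfold_locales (auto simp: fscale_def fun_eq_iff algebra_simps)

interpretation fvp: vector_space_pair "fscale :: 'a::field \<Rightarrow> _" "fscale :: 'a::field \<Rightarrow> _"
  by unfold_locales

lemma sum_fun_at: "(sum f A) x = (\<Sum>a\<in>A. f a x)"
  by (induct A rule: infinite_finite_induct) auto

definition ev :: "nat \<Rightarrow> nat \<Rightarrow> 'a::field" where
  "ev c = (\<lambda>r. if r = c then 1 else 0)"

lemma ma_csp: "mat_apply M s t x \<in> csp t"
  by (simp add: mat_apply_def csp_def)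

lemma ma_add: "mat_apply M s t (\<lambda>n. x n + y n) = (\<lambda>r. mat_apply M s t x r + mat_apply M s t y r)"
  by (auto simp: mat_apply_def fun_eq_iff algebra_simps sum.distrib)

lemma ma_diff: "mat_apply M s t (\<lambda>n. x n - y n) = (\<lambda>r. mat_apply M s t x r - mat_apply M s t y r)"
  by (auto simp: mat_apply_def fun_eq_iff algebra_simps sum_subtractf)

lemma ma_scale: "mat_apply M s t (\<lambda>n. c * x n) = (\<lambda>r. c * mat_apply M s t x r)"
  by (auto simp: mat_apply_def fun_eq_iff algebra_simps sum_distrib_left)

lemma ma_zero: "mat_apply M s t (\<lambda>n. 0) = (\<lambda>n. 0)"
  by (auto simp: mat_apply_def fun_eq_iff)

lemma ma_linear: "Vector_Spaces.linear fscale fscale (mat_apply M s t)"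
  apply (unfold_locales)
  using ma_add[of M s t] ma_scale[of M s t] by (auto simp: plus_fun_def fscale_def)

lemma ma_ev: "c < s \<Longrightarrow> mat_apply M s t (ev c) = (\<lambda>r. if r < t then M r c else 0)"
  by (auto simp: mat_apply_def ev_def fun_eq_iff if_distrib cong: if_cong)

lemma csp_sum_ev: "y \<in> csp p \<Longrightarrow> y = (\<Sum>c<p. fscale (y c) (ev c))"
  by (auto simp: fun_eq_iff sum_fun_at fscale_def ev_def csp_def if_distrib cong: if_cong)

lemma fvs_subspace_csp: "fvs.subspace (csp n)"
  by (auto simp: fvs.subspace_def csp_def fscale_def)

lemma ginv:
  "\<exists>N. \<forall>x\<in>csp n. mat_apply M n p (mat_apply N p n (mat_apply M n p x)) = mat_apply M n p x"
proof -
  obtain g where g: "range g \<subseteq> csp n" "Vector_Spaces.linear fscale fscale g"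
    "\<forall>v\<in>mat_apply M n p ` csp n. mat_apply M n p (g v) = v"
    using fvp.linear_exists_right_inverse_on[OF ma_linear fvs_subspace_csp] by blast
  define N where "N = (\<lambda>r c. g (ev c) r)"
  have eq: "mat_apply N p n y = g y" if y: "y \<in> csp p" for y
  proof -
    have "g y = g (\<Sum>c<p. fscale (y c) (ev c))" using csp_sum_ev[OF y] by simp
    also have "\<dots> = (\<Sum>c<p. fscale (y c) (g (ev c)))"
      using g(2) by (simp add: linear_iff_module_hom module_hom.sum module_hom.scale)
    finally have gy: "g y = (\<Sum>c<p. fscale (y c) (g (ev c)))" .
    have "g y \<in> csp n" using g(1) by auto
    then show ?thesis
      by (auto simp: fun_eq_iff mat_apply_def gy sum_fun_at fscale_def N_def csp_def mult.commute)
  qed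
  show ?thesis
    by (rule exI[of _ N]) (auto simp: eq[OF ma_csp] g(3))
qed

definition bcm :: "(nat \<Rightarrow> nat \<Rightarrow> 'a::field) \<Rightarrow> (nat \<Rightarrow> nat \<Rightarrow> 'a alg_closure)" where
  "bcm M = (\<lambda>r c. to_ac (M r c))"

lemma ev_csp: "c < n \<Longrightarrow> ev c \<in> csp n"
  by (simp add: ev_def csp_def)

lemma KT:
  fixes M :: "nat \<Rightarrow> nat \<Rightarrow> 'a::field" and D :: "nat \<Rightarrow> nat \<Rightarrow> 'a"
  assumes A: "\<forall>x\<in>csp n. mat_apply M n p x = (\<lambda>_. 0) \<longrightarrow> (\<exists>y\<in>csp m. x = mat_apply D m n y)"
  shows "\<forall>x\<in>csp n. mat_apply (bcm M) n p x = (\<lambda>_. 0) \<longrightarrow> (\<exists>y\<in>csp m. x = mat_apply (bcm D) m n y)"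
proof -
  obtain N where N: "\<forall>x\<in>csp n. mat_apply M n p (mat_apply N p n (mat_apply M n p x)) = mat_apply M n p x"
    using ginv by blast
  define w where "w c = (\<lambda>r. ev c r - mat_apply N p n (mat_apply M n p (ev c)) r)" for c
  have wex: "\<exists>y\<in>csp m. w c = mat_apply D m n y" if c: "c < n" for c
  proof -
    have "w c \<in> csp n" using ev_csp[OF c] ma_csp[of N p n] by (auto simp: w_def csp_def)
    moreover have "mat_apply M n p (w c) = (\<lambda>_. 0)"
      unfolding w_def ma_diff using N ev_csp[OF c] by auto
    ultimately show ?thesis using A by blast
  qed
  define G where "G = (\<lambda>l c. (SOME y. y \<in> csp m \<and> w c = mat_apply D m n y) l)"
  have Gp: "(\<lambda>l. G l c) \<in> csp m \<and> w c = mat_apply D m n (\<lambda>l. G l c)" if "c < n" for c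
    using someI_ex[OF wex[OF that, unfolded Bex_def]] by (simp add: G_def)
  have ent: "(if r = c then 1 else 0) - (\<Sum>l<p. N r l * M l c) = (\<Sum>l<m. D r l * G l c)"
    if "r < n" "c < n" for r c
  proof -
    have "w c r = mat_apply D m n (\<lambda>l. G l c) r" using Gp[OF that(2)] by simp
    moreover have "w c r = ev c r - (\<Sum>l<p. N r l * mat_apply M n p (ev c) l)"
      using that(1) unfolding w_def mat_apply_def[of N] by simp
    moreover have "(\<Sum>l<p. N r l * mat_apply M n p (ev c) l) = (\<Sum>l<p. N r l * M l c)"
      using ma_ev[OF that(2), of M p] by simp
    ultimately show ?thesis using that
      by (simp add: ev_def mat_apply_def)
  qed
  have entK: "(if r = c then 1 else 0) - (\<Sum>l<p. bcm N r l * bcm M l c) = (\<Sum>l<m. bcm D r l * bcm G l c)"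
    if "r < n" "c < n" for r c
  proof -
    have "to_ac ((if r = c then 1 else 0) - (\<Sum>l<p. N r l * M l c)) = to_ac (\<Sum>l<m. D r l * G l c)"
      using ent[OF that] by simp
    then show ?thesis by (cases "r = c") (simp_all add: to_ac_sum bcm_def)
  qed
  show ?thesis
  proof (intro ballI impI)
    fix x :: "nat \<Rightarrow> 'a alg_closure"
    assume x: "x \<in> csp n" and Mx: "mat_apply (bcm M) n p x = (\<lambda>_. 0)"
    have Mx': "(\<Sum>c<n. bcm M l c * x c) = 0" if "l < p" for l
      using fun_cong[OF Mx, of l] that by (simp add: mat_apply_def)
    have "x = mat_apply (bcm D) m n (mat_apply (bcm G) n m x)"
    proof
      fix r
      show "x r = mat_apply (bcm D) m n (mat_apply (bcm G) n m x) r"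
      proof (cases "r < n")
        case False then show ?thesis using x by (simp add: csp_def mat_apply_def)
      next
        case True
        have "mat_apply (bcm D) m n (mat_apply (bcm G) n m x) r
              = (\<Sum>l<m. bcm D r l * (\<Sum>c<n. bcm G l c * x c))"
          using True by (simp add: mat_apply_def)
        also have "\<dots> = (\<Sum>c<n. (\<Sum>l<m. bcm D r l * bcm G l c) * x c)"
          by (simp add: sum_distrib_left sum_distrib_right mult.assoc sum.swap[of _ "{..<m}"])
        also have "\<dots> = (\<Sum>c<n. ((if r = c then 1 else 0) - (\<Sum>l<p. bcm N r l * bcm M l c)) * x c)"
          using entK[OF True] by simp
        also have "\<dots> = (\<Sum>c<n. (if r = c then x c else 0)) - (\<Sum>l<p. bcm N r l * (\<Sum>c<n. bcm M l c * x c))"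
        proof -
          have e1: "(\<Sum>c<n. ((if r = c then 1 else 0) - (\<Sum>l<p. bcm N r l * bcm M l c)) * x c)
              = (\<Sum>c<n. (if r = c then 1 else 0) * x c) - (\<Sum>c<n. (\<Sum>l<p. bcm N r l * bcm M l c) * x c)"
            by (simp add: left_diff_distrib sum_subtractf)
          have e2: "(\<Sum>c<n. (\<Sum>l<p. bcm N r l * bcm M l c) * x c) = (\<Sum>l<p. bcm N r l * (\<Sum>c<n. bcm M l c * x c))"
            by (simp add: sum_distrib_left sum_distrib_right mult.assoc sum.swap[of _ "{..<p}"])
          have e3: "(\<Sum>c<n. (if r = c then 1 else 0) * x c) = (\<Sum>c<n. (if r = c then x c else 0))"
            by (rule sum.cong) auto
          show ?thesis using e1 e2 e3 by simp
        qed
        also have "\<dots> = x r"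
          using True Mx' by simp
        finally show ?thesis by simp
      qed
    qed
    then show "\<exists>y\<in>csp m. x = mat_apply (bcm D) m n y" using ma_csp by blast
  qed
qed

lemma ma_ent_eq:
  assumes "\<forall>x\<in>csp n. mat_apply C n p x = mat_apply C' n p x" "r < p" "c < n"
  shows "C r c = C' r c"
  using fun_cong[OF assms(1)[rule_format, OF ev_csp[OF assms(3)]], of r] assms(2,3)
  by (simp add: ma_ev[OF assms(3)])

definition mmul :: "nat \<Rightarrow> (nat \<Rightarrow> nat \<Rightarrow> 'a::field) \<Rightarrow> (nat \<Rightarrow> nat \<Rightarrow> 'a) \<Rightarrow> (nat \<Rightarrow> nat \<Rightarrow> 'a)" where
  "mmul m A B = (\<lambda>r c. \<Sum>l<m. A r l * B l c)"

lemma ma_comp: "mat_apply A m p (mat_apply B n m x) = mat_apply (mmul m A B) n p x"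
  by (auto simp: mat_apply_def mmul_def fun_eq_iff sum_distrib_left sum_distrib_right mult.assoc
      intro!: sum.swap)

lemma bcm_mmul: "bcm (mmul m A B) = mmul m (bcm A) (bcm B)"
  by (simp add: bcm_def mmul_def to_ac_sum fun_eq_iff)

lemma RT:
  fixes A B :: "nat \<Rightarrow> nat \<Rightarrow> 'a::field"
  assumes "\<forall>x\<in>csp n. mat_apply A m p (mat_apply B n m x) = (\<lambda>_. 0)"
  shows "\<forall>x\<in>csp n. mat_apply (bcm A) m p (mat_apply (bcm B) n m x) = (\<lambda>_. 0)"
proof -
  have z: "(\<lambda>_. 0) = mat_apply (\<lambda>r c. 0) n p x" for x :: "nat \<Rightarrow> 'b::field"
    by (simp add: mat_apply_def fun_eq_iff)
  have "mmul m A B r c = 0" if "r < p" "c < n" for r c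
    using ma_ent_eq[of n "mmul m A B" p "\<lambda>r c. 0", OF _ that] assms
    by (simp add: ma_comp[symmetric] z[symmetric])
  then have "bcm (mmul m A B) r c = 0" if "r < p" "c < n" for r c
    using that by (simp add: bcm_def)
  then show ?thesis
    unfolding ma_comp bcm_mmul[symmetric] by (auto simp: mat_apply_def fun_eq_iff)
qed

lemma ST:
  fixes A B :: "nat \<Rightarrow> nat \<Rightarrow> 'a::field"
  assumes S: "\<forall>z\<in>csp n. \<exists>y\<in>csp m1. \<exists>u\<in>csp m2. z = (\<lambda>k. mat_apply A m1 n y k + mat_apply B m2 n u k)"
  shows "\<forall>z\<in>csp n. \<exists>y\<in>csp m1. \<exists>u\<in>csp m2. z = (\<lambda>k. mat_apply (bcm A) m1 n y k + mat_apply (bcm B) m2 n u k)"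
proof -
  define P where "P c = (SOME yu. fst yu \<in> csp m1 \<and> snd yu \<in> csp m2 \<and>
      ev c = (\<lambda>k. mat_apply A m1 n (fst yu) k + mat_apply B m2 n (snd yu) k))" for c
  have Pp: "ev c = (\<lambda>k. mat_apply A m1 n (fst (P c)) k + mat_apply B m2 n (snd (P c)) k)"
    if c: "c < n" for c
  proof -
    obtain y u where "y \<in> csp m1" "u \<in> csp m2" "ev c = (\<lambda>k. mat_apply A m1 n y k + mat_apply B m2 n u k)"
      using S ev_csp[OF c] by blast
    then have "\<exists>yu. fst yu \<in> csp m1 \<and> snd yu \<in> csp m2 \<and>
      ev c = (\<lambda>k. mat_apply A m1 n (fst yu) k + mat_apply B m2 n (snd yu) k)"
      by (intro exI[of _ "(y,u)"]) auto
    from someI_ex[OF this] show ?thesis unfolding P_def by blast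
  qed
  define Y where "Y = (\<lambda>l c. fst (P c) l)"
  define V where "V = (\<lambda>l c. snd (P c) l)"
  have ent: "(if r = c then 1 else 0) = (\<Sum>l<m1. A r l * Y l c) + (\<Sum>l<m2. B r l * V l c)"
    if "r < n" "c < n" for r c
    using fun_cong[OF Pp[OF that(2)], of r] that by (simp add: ev_def mat_apply_def Y_def V_def)
  have entK: "(if r = c then 1 else 0) = (\<Sum>l<m1. bcm A r l * bcm Y l c) + (\<Sum>l<m2. bcm B r l * bcm V l c)"
    if "r < n" "c < n" for r c
  proof -
    have "to_ac (if r = c then 1 else 0) = to_ac ((\<Sum>l<m1. A r l * Y l c) + (\<Sum>l<m2. B r l * V l c))"
      using ent[OF that] by simp
    then show ?thesis by (cases "r = c") (simp_all add: to_ac_sum bcm_def)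
  qed
  show ?thesis
  proof
    fix z :: "nat \<Rightarrow> 'a alg_closure" assume z: "z \<in> csp n"
    have "z = (\<lambda>k. mat_apply (bcm A) m1 n (mat_apply (bcm Y) n m1 z) k + mat_apply (bcm B) m2 n (mat_apply (bcm V) n m2 z) k)"
    proof
      fix r
      show "z r = mat_apply (bcm A) m1 n (mat_apply (bcm Y) n m1 z) r + mat_apply (bcm B) m2 n (mat_apply (bcm V) n m2 z) r"
      proof (cases "r < n")
        case False then show ?thesis using z by (simp add: csp_def mat_apply_def)
      next
        case True
        have "mat_apply (bcm A) m1 n (mat_apply (bcm Y) n m1 z) r + mat_apply (bcm B) m2 n (mat_apply (bcm V) n m2 z) r
          = (\<Sum>c<n. ((\<Sum>l<m1. bcm A r l * bcm Y l c) + (\<Sum>l<m2. bcm B r l * bcm V l c)) * z c)"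
          using True by (simp add: mat_apply_def sum_distrib_left sum_distrib_right mult.assoc
              sum.distrib distrib_right sum.swap[of _ "{..<n}"])
        also have "\<dots> = (\<Sum>c<n. (if r = c then z c else 0))"
          by (intro sum.cong refl) (subst entK[OF True, symmetric], auto)
        also have "\<dots> = z r" using True by simp
        finally show ?thesis by simp
      qed
    qed
    then show "\<exists>y\<in>csp m1. \<exists>u\<in>csp m2. z = (\<lambda>k. mat_apply (bcm A) m1 n y k + mat_apply (bcm B) m2 n u k)"
      using ma_csp by blast
  qed
qed

lemma bc_eq: "base_change U i = bcm (U i)"
  by (simp add: base_change_def bcm_def fun_eq_iff)

lemma up_bc: "up_map d (base_change U) i = mat_apply (bcm (U i)) (d i) (d (i+1))"
  by (simp add: up_map_def bc_eq)

lemma down_bc: "down_map d (base_change D) i = mat_apply (bcm (D i)) (d (i+1)) (d i)"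
  by (simp add: down_map_def bc_eq)

lemma colinked_bc:
  assumes "colinked_chain d U D"
  shows "colinked_chain d (base_change U) (base_change D)"
  unfolding colinked_chain_def
proof (intro allI conjI)
  fix i
  show "\<forall>x\<in>cspace d i. down_map d (base_change D) i (up_map d (base_change U) i x) = (\<lambda>n. 0)"
    using assms RT[of "d i" "D i" "d (i+1)" "d i" "U i"] unfolding up_bc down_bc
    by (simp add: colinked_chain_def up_map_def down_map_def up_bc down_bc cspace_csp)
  show "\<forall>y\<in>cspace d (i + 1). up_map d (base_change U) i (down_map d (base_change D) i y) = (\<lambda>n. 0)"
    using assms RT[of "d (i+1)" "U i" "d i" "d (i+1)" "D i"] unfolding up_bc down_bc
    by (simp add: colinked_chain_def up_map_def down_map_def up_bc down_bc cspace_csp)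
  show "\<forall>z\<in>cspace d i. \<exists>y\<in>cspace d (i + 1). \<exists>u\<in>cspace d (i - 1).
           z = (\<lambda>n. down_map d (base_change D) i y n + up_map d (base_change U) (i - 1) u n)"
    using assms ST[of "d i" "d (i+1)" "d (i - 1)" "D i" "U (i - 1)"] unfolding up_bc down_bc
    by (simp add: colinked_chain_def up_map_def down_map_def up_bc down_bc cspace_csp)
qed

lemma exact_bc:
  assumes "exact_rep d U D"
  shows "\<forall>x\<in>cspace d i. up_map d (base_change U) i x = (\<lambda>_. 0) \<longrightarrow>
           x \<in> down_map d (base_change D) i ` cspace d (i+1)"
proof -
  have "\<forall>x\<in>csp (d i). mat_apply (U i) (d i) (d (i+1)) x = (\<lambda>_. 0) \<longrightarrow>
          (\<exists>y\<in>csp (d (i+1)). x = mat_apply (D i) (d (i+1)) (d i) y)"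
    using assms unfolding exact_rep_def exact_on_def
    by (auto simp: up_map_def down_map_def cspace_csp set_eq_iff image_iff)
  from KT[OF this] show ?thesis
    by (auto simp: up_bc down_bc cspace_csp)
qed

lemma inj_KT:
  fixes M :: "nat \<Rightarrow> nat \<Rightarrow> 'a::field"
  assumes "inj_on (mat_apply M n p) (csp n)"
  shows "inj_on (mat_apply (bcm M) n p) (csp n)"
proof -
  have z: "mat_apply (\<lambda>r c. 0) 0 n y = (\<lambda>_. 0)" for y :: "nat \<Rightarrow> 'b::field"
    by (simp add: mat_apply_def fun_eq_iff)
  have zc: "(\<lambda>_. 0) \<in> csp n" by (simp add: csp_def)
  have "\<forall>x\<in>csp n. mat_apply M n p x = (\<lambda>_. 0) \<longrightarrow> (\<exists>y\<in>csp 0. x = mat_apply (\<lambda>r c. 0) 0 n y)"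
    using assms zc ma_zero[of M n p] unfolding inj_on_def z by (auto simp: csp_def)
  from KT[OF this] have K: "\<forall>x\<in>csp n. mat_apply (bcm M) n p x = (\<lambda>_. 0) \<longrightarrow> x = (\<lambda>_. 0)"
    by (auto simp: bcm_def z)
  show ?thesis
  proof (rule inj_onI)
    fix x y assume x: "x \<in> csp n" and y: "y \<in> csp n" and e: "mat_apply (bcm M) n p x = mat_apply (bcm M) n p y"
    have "mat_apply (bcm M) n p (\<lambda>k. x k - y k) = (\<lambda>_. 0)" using e by (simp add: ma_diff)
    moreover have "(\<lambda>k. x k - y k) \<in> csp n" using x y by (simp add: csp_def)
    ultimately have "(\<lambda>k. x k - y k) = (\<lambda>_. 0)" using K by blast
    then show "x = y" by (simp add: fun_eq_iff)
  qed
qed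

lemma downs_Suc: "downs d D i (Suc k) x = downs d D (i - 1) k (down_map d D (i - 1) x)"
proof (induct k arbitrary: x)
  case 0 then show ?case by simp
next
  case (Suc k)
  have "downs d D i (Suc (Suc k)) x = down_map d D (i - int (Suc k) - 1) (downs d D i (Suc k) x)" by simp
  also have "\<dots> = down_map d D (i - 1 - int k - 1) (downs d D (i - 1) k (down_map d D (i - 1) x))"
    using Suc by (simp add: algebra_simps)
  finally show ?case by simp
qed

lemma ups_Suc: "ups d U i (Suc k) x = ups d U (i + 1) k (up_map d U i x)"
proof (induct k arbitrary: x)
  case 0 then show ?case by simp
next
  case (Suc k)
  have "ups d U i (Suc (Suc k)) x = up_map d U (i + int (Suc k)) (ups d U i (Suc k) x)" by simp
  also have "\<dots> = up_map d U (i + 1 + int k) (ups d U (i + 1) k (up_map d U i x))"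
    using Suc by (simp add: algebra_simps)
  finally show ?case by simp
qed

lemma cos_right:
  assumes "is_cosupport d U D H" "\<forall>h\<in>H. h \<le> b" "b \<le> j"
  shows "inj_on (down_map d D j) (cspace d (j+1))"
proof -
  obtain h where h: "h \<in> H" "inj_on (comp_map d U D (j+1) h) (cspace d (j+1))"
    using assms(1) unfolding is_cosupport_def by blast
  have hl: "h < j + 1" using h(1) assms(2,3) by force
  obtain k where k: "nat (j + 1 - h) = Suc k" using hl by (metis gr0_implies_Suc zero_less_nat_eq diff_gt_0_iff_gt)
  have "comp_map d U D (j+1) h = downs d D j k \<circ> down_map d D j"
    using hl k by (simp add: comp_map_def fun_eq_iff downs_Suc del: downs.simps)
  then show ?thesis using h(2) inj_on_imageI2 by metis
qed

lemma cos_left: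
  assumes "is_cosupport d U D H" "\<forall>h\<in>H. a \<le> h" "j < a"
  shows "inj_on (up_map d U j) (cspace d j)"
proof -
  obtain h where h: "h \<in> H" "inj_on (comp_map d U D j h) (cspace d j)"
    using assms(1) unfolding is_cosupport_def by blast
  have hl: "j < h" using h(1) assms(2,3) by force
  obtain k where k: "nat (h - j) = Suc k" using hl by (metis gr0_implies_Suc zero_less_nat_eq diff_gt_0_iff_gt)
  have "comp_map d U D j h = ups d U (j + 1) k \<circ> up_map d U j"
    using hl k by (simp add: comp_map_def fun_eq_iff ups_Suc del: ups.simps)
  then show ?thesis using h(2) inj_on_imageI2 by metis
qed



definition sp :: "(nat \<Rightarrow> 'a::field) \<Rightarrow> (nat \<Rightarrow> 'a) set" where
  "sp x = {(\<lambda>n. c * x n) | c. True}"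

lemma is_line_sp: "is_line d i L \<longleftrightarrow> (\<exists>x\<in>cspace d i. x \<noteq> (\<lambda>n. 0) \<and> L = sp x)"
  by (simp add: is_line_def sp_def)

lemma sp_self: "x \<in> sp x"
  unfolding sp_def by (auto intro: exI[of _ 1])

lemma sp_zero: "(\<lambda>n. 0) \<in> sp x"
  unfolding sp_def by (auto intro: exI[of _ 0])

lemma sp_mem: "y \<in> sp x \<longleftrightarrow> (\<exists>c. y = (\<lambda>n. c * x n))"
  unfolding sp_def by auto

lemma sp_memE: "y \<in> sp x \<Longrightarrow> (\<And>c. y = (\<lambda>n. c * x n) \<Longrightarrow> P) \<Longrightarrow> P"
  unfolding sp_def by blast

lemma sp_memI: "(\<lambda>n. c * x n) \<in> sp x"
  unfolding sp_def by blast

lemma sp_scale: "y \<in> sp x \<Longrightarrow> (\<lambda>n. c * y n) \<in> sp x"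
proof -
  assume "y \<in> sp x"
  then obtain c' where "y = (\<lambda>n. c' * x n)" using sp_mem by blast
  then show ?thesis unfolding sp_mem by (intro exI[of _ "c * c'"]) (simp add: mult.assoc)
qed

lemma sp_eq:
  assumes "y \<in> sp x" "y \<noteq> (\<lambda>n. 0)"
  shows "sp y = sp x"
proof -
  obtain c where c: "y = (\<lambda>n. c * x n)" using assms(1) sp_mem by blast
  have c0: "c \<noteq> 0" using assms(2) c by auto
  have "x = (\<lambda>n. inverse c * y n)" using c c0 by (simp add: fun_eq_iff)
  then have "x \<in> sp y" using sp_mem by blast
  show ?thesis
  proof
    show "sp y \<subseteq> sp x" using assms(1) sp_scale by (auto simp: sp_mem[of _ y])
    show "sp x \<subseteq> sp y" using \<open>x \<in> sp y\<close> sp_scale by (auto simp: sp_mem[of _ x])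
  qed
qed

lemma line_sp:
  assumes "is_line d i L" "y \<in> L" "y \<noteq> (\<lambda>n. 0)"
  shows "L = sp y"
  using assms sp_eq unfolding is_line_sp by metis

lemma line_ex: "is_line d i L \<Longrightarrow> \<exists>y\<in>L. y \<noteq> (\<lambda>n. 0)"
  unfolding is_line_sp using sp_self by blast

lemma line_csp: "is_line d i L \<Longrightarrow> L \<subseteq> cspace d i"
  by (force simp: is_line_sp sp_mem cspace_def)

lemma line_scale: "is_line d i L \<Longrightarrow> y \<in> L \<Longrightarrow> (\<lambda>n. c * y n) \<in> L"
  unfolding is_line_sp using sp_scale by blast

lemma line_zero: "is_line d i L \<Longrightarrow> (\<lambda>n. 0) \<in> L"
  unfolding is_line_sp using sp_zero by blast

lemma up_scale: "up_map d U i (\<lambda>n. c * x n) = (\<lambda>n. c * up_map d U i x n)"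
  by (simp add: up_map_def ma_scale)
lemma dn_scale: "down_map d D i (\<lambda>n. c * x n) = (\<lambda>n. c * down_map d D i x n)"
  by (simp add: down_map_def ma_scale)
lemma up_add: "up_map d U i (\<lambda>n. x n + y n) = (\<lambda>n. up_map d U i x n + up_map d U i y n)"
  by (simp add: up_map_def ma_add)
lemma dn_add: "down_map d D i (\<lambda>n. x n + y n) = (\<lambda>n. down_map d D i x n + down_map d D i y n)"
  by (simp add: down_map_def ma_add)
lemma up_zero: "up_map d U i (\<lambda>n. 0) = (\<lambda>n. 0)"
  by (simp add: up_map_def ma_zero)
lemma dn_zero: "down_map d D i (\<lambda>n. 0) = (\<lambda>n. 0)"
  by (simp add: down_map_def ma_zero)
lemma up_csp: "up_map d U i x \<in> cspace d (i+1)"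
  using ma_csp by (simp add: up_map_def cspace_csp)
lemma dn_csp: "down_map d D i x \<in> cspace d i"
  using ma_csp by (simp add: down_map_def cspace_csp)

lemma pair_exact:
  fixes f g :: "(nat \<Rightarrow> 'a::field) \<Rightarrow> (nat \<Rightarrow> 'a)"
  assumes A: "A = sp a" and B: "B = sp b" and fA: "f ` A \<subseteq> B" and gB: "g ` B \<subseteq> A"
    and fh: "\<And>c x. f (\<lambda>n. c * x n) = (\<lambda>n. c * f x n)"
    and gh: "\<And>c x. g (\<lambda>n. c * x n) = (\<lambda>n. c * g x n)"
    and gf: "\<forall>x\<in>A. g (f x) = (\<lambda>n. 0)" and fa: "f a \<noteq> (\<lambda>n. 0)"
  shows "{x\<in>A. f x = (\<lambda>n. 0)} = g ` B \<and> {y\<in>B. g y = (\<lambda>n. 0)} = f ` A"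
proof -
  have faB: "f a \<in> B" using fA A sp_self by blast
  have B': "B = sp (f a)" using sp_eq[of "f a" b] faB fa B by simp
  have gfa: "g (f a) = (\<lambda>n. 0)" using gf A sp_self by blast
  have f0: "f (\<lambda>n. 0) = (\<lambda>n. 0)" using fh[of 0 a] by simp
  have x0: "x = (\<lambda>n. 0)" if "x \<in> A" "f x = (\<lambda>n. 0)" for x
  proof -
    from that(1) obtain c where c: "x = (\<lambda>n. c * a n)" unfolding A by (rule sp_memE)
    have "f x = (\<lambda>n. c * f a n)" unfolding c by (rule fh)
    then have "(\<lambda>n. c * f a n) = (\<lambda>n. 0)" using that(2) by simp
    then have "c = 0" using fa by (auto simp: fun_eq_iff)
    then show ?thesis using c by simp
  qed
  have gy: "g y = (\<lambda>n. 0)" if "y \<in> B" for y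
  proof -
    from that obtain c where c: "y = (\<lambda>n. c * f a n)" unfolding B' by (rule sp_memE)
    have "g y = (\<lambda>n. c * g (f a) n)" unfolding c by (rule gh)
    then show ?thesis using gfa by simp
  qed
  have s1: "{x\<in>A. f x = (\<lambda>n. 0)} = {(\<lambda>n. 0)}"
    using x0 f0 A sp_zero by blast
  have s2: "g ` B = {(\<lambda>n. 0)}"
  proof
    show "g ` B \<subseteq> {(\<lambda>n. 0)}" using gy by blast
    have "g (f a) \<in> g ` B" using faB by (rule imageI)
    then show "{(\<lambda>n. 0)} \<subseteq> g ` B" using gfa by simp
  qed
  have s3: "{y\<in>B. g y = (\<lambda>n. 0)} = B" using gy by blast
  have s4: "B \<subseteq> f ` A"
  proof
    fix y assume "y \<in> B"
    then obtain c where c: "y = (\<lambda>n. c * f a n)" unfolding B' by (rule sp_memE)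
    have "y = f (\<lambda>n. c * a n)" unfolding c by (rule fh[symmetric])
    moreover have "(\<lambda>n. c * a n) \<in> A" unfolding A by (rule sp_memI)
    ultimately show "y \<in> f ` A" by blast
  qed
  show ?thesis using s1 s2 s3 s4 fA by blast
qed

definition bad :: "(int \<Rightarrow> nat) \<Rightarrow> (int \<Rightarrow> nat \<Rightarrow> nat \<Rightarrow> 'a::field) \<Rightarrow> (int \<Rightarrow> nat \<Rightarrow> nat \<Rightarrow> 'a)
    \<Rightarrow> (int \<Rightarrow> (nat \<Rightarrow> 'a) set) \<Rightarrow> int \<Rightarrow> bool" where
  "bad d U D W i \<longleftrightarrow> (\<forall>x\<in>W i. up_map d U i x = (\<lambda>n. 0)) \<and> (\<forall>y\<in>W (i+1). down_map d D i y = (\<lambda>n. 0))"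

lemma LP_line: "W \<in> LP d U D \<Longrightarrow> is_line d i (W i)"
  by (simp add: LP_def)
lemma LP_up: "W \<in> LP d U D \<Longrightarrow> x \<in> W i \<Longrightarrow> up_map d U i x \<in> W (i+1)"
  unfolding LP_def image_subset_iff by blast
lemma LP_dn: "W \<in> LP d U D \<Longrightarrow> y \<in> W (i+1) \<Longrightarrow> down_map d D i y \<in> W i"
  unfolding LP_def image_subset_iff by blast

lemma col_du: "colinked_chain d U D \<Longrightarrow> x \<in> cspace d i \<Longrightarrow> down_map d D i (up_map d U i x) = (\<lambda>n. 0)"
  by (simp add: colinked_chain_def)
lemma col_ud: "colinked_chain d U D \<Longrightarrow> y \<in> cspace d (i+1) \<Longrightarrow> up_map d U i (down_map d D i y) = (\<lambda>n. 0)"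
  by (simp add: colinked_chain_def)

lemma exact_iff_nobad:
  assumes col: "colinked_chain d U D" and W: "W \<in> LP d U D"
  shows "exact_on W (up_map d U) (down_map d D) \<longleftrightarrow> (\<forall>i. \<not> bad d U D W i)"
proof
  assume ex: "exact_on W (up_map d U) (down_map d D)"
  show "\<forall>i. \<not> bad d U D W i"
  proof (intro allI notI)
    fix i assume bd: "bad d U D W i"
    have "{x\<in>W i. up_map d U i x = (\<lambda>n. 0)} = down_map d D i ` W (i + 1)"
      using ex by (simp add: exact_on_def)
    moreover obtain a where a: "a \<in> W i" "a \<noteq> (\<lambda>n. 0)" using line_ex[OF LP_line[OF W, of i]] by blast
    moreover have "up_map d U i a = (\<lambda>n. 0)" using a(1) bd by (simp add: bad_def)
    ultimately have "a \<in> down_map d D i ` W (i + 1)" by blast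
    then obtain y where y: "y \<in> W (i+1)" "a = down_map d D i y" by blast
    then have "a = (\<lambda>n. 0)" using bd by (simp add: bad_def)
    with a(2) show False by simp
  qed
next
  assume nb: "\<forall>i. \<not> bad d U D W i"
  show "exact_on W (up_map d U) (down_map d D)"
    unfolding exact_on_def
  proof
    fix i
    obtain a where a: "a \<in> W i" "a \<noteq> (\<lambda>n. 0)" using line_ex[OF LP_line[OF W, of i]] by blast
    obtain b where b: "b \<in> W (i+1)" "b \<noteq> (\<lambda>n. 0)" using line_ex[OF LP_line[OF W, of "i+1"]] by blast
    have Wa: "W i = sp a" using line_sp[OF LP_line[OF W] a] .
    have Wb: "W (i+1) = sp b" using line_sp[OF LP_line[OF W] b] .
    have fA: "up_map d U i ` W i \<subseteq> W (i+1)" and gB: "down_map d D i ` W (i+1) \<subseteq> W i"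
      using LP_up[OF W] LP_dn[OF W] by auto
    have gf: "\<forall>x\<in>W i. down_map d D i (up_map d U i x) = (\<lambda>n. 0)"
      using col_du[OF col] line_csp[OF LP_line[OF W]] by blast
    have fg: "\<forall>x\<in>W (i+1). up_map d U i (down_map d D i x) = (\<lambda>n. 0)"
      using col_ud[OF col] line_csp[OF LP_line[OF W]] by blast
    show "{x \<in> W i. up_map d U i x = (\<lambda>n. 0)} = down_map d D i ` W (i + 1) \<and>
         {y \<in> W (i + 1). down_map d D i y = (\<lambda>n. 0)} = up_map d U i ` W i"
    proof (cases "up_map d U i a = (\<lambda>n. 0)")
      case False
      show ?thesis
        by (rule pair_exact[OF Wa Wb fA gB up_scale dn_scale gf False])
    next
      case True
      have "\<not> (\<forall>y\<in>W (i+1). down_map d D i y = (\<lambda>n. 0))"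
      proof
        assume "\<forall>y\<in>W (i+1). down_map d D i y = (\<lambda>n. 0)"
        moreover have "\<forall>x\<in>W i. up_map d U i x = (\<lambda>n. 0)"
          using True Wa by (auto simp: sp_mem up_scale)
        ultimately show False using nb by (auto simp: bad_def)
      qed
      then obtain y where y: "y \<in> W (i+1)" "down_map d D i y \<noteq> (\<lambda>n. 0)" by blast
      have y0: "y \<noteq> (\<lambda>n. 0)"
      proof
        assume "y = (\<lambda>n. 0)"
        then have "down_map d D i y = (\<lambda>n. 0)" by (simp add: dn_zero)
        with y(2) show False by simp
      qed
      have Wy: "W (i+1) = sp y" using line_sp[OF LP_line[OF W] y(1) y0] .
      have P: "{x\<in>W (i+1). down_map d D i x = (\<lambda>n. 0)} = up_map d U i ` W i \<and>
           {x\<in>W i. up_map d U i x = (\<lambda>n. 0)} = down_map d D i ` W (i+1)"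
        by (rule pair_exact[OF Wy Wa gB fA dn_scale up_scale fg y(2)])
      then show ?thesis by (elim conjE) (intro conjI)
    qed
  qed
qed



lemma pf_sum: "finite I \<Longrightarrow> (\<forall>k\<in>I. f k \<in> polyfun H d) \<Longrightarrow> (\<lambda>x. \<Sum>k\<in>I. f k x) \<in> polyfun H d"
proof (induct I rule: finite_induct)
  case empty then show ?case by (simp add: pf_const)
next
  case (insert a F)
  then have "(\<lambda>x. f a x + (\<Sum>k\<in>F. f k x)) \<in> polyfun H d" by (simp add: pf_add)
  then show ?case using insert by simp
qed

lemma pf_prod: "finite I \<Longrightarrow> (\<forall>k\<in>I. f k \<in> polyfun H d) \<Longrightarrow> (\<lambda>x. \<Prod>k\<in>I. f k x) \<in> polyfun H d"
proof (induct I rule: finite_induct)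
  case empty then show ?case by (simp add: pf_const)
next
  case (insert a F)
  then have "(\<lambda>x. f a x * (\<Prod>k\<in>F. f k x)) \<in> polyfun H d" by (simp add: pf_mult)
  then show ?case using insert by simp
qed

lemma pf_local: "f \<in> polyfun H d \<Longrightarrow> (\<forall>i\<in>H. \<forall>n<d i. x i n = y i n) \<Longrightarrow> f x = f y"
  by (induct f rule: polyfun.induct) auto

lemma multihom_lin:
  assumes "finite H" "i \<in> H" "r < t"
  shows "multihom H d (\<lambda>x. mat_apply M (d i) t (x i) r)"
  unfolding multihom_def
proof
  have e: "(\<lambda>x. mat_apply M (d i) t (x i) r) = (\<lambda>x. \<Sum>c<d i. M r c * x i c)"
    using assms(3) by (simp add: mat_apply_def fun_eq_iff)
  show "(\<lambda>x. mat_apply M (d i) t (x i) r) \<in> polyfun H d"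
    unfolding e by (rule pf_sum) (auto intro!: pf_mult pf_const pf_var assms(2))
  have p: "(\<Prod>j\<in>H. tt j ^ (if j = i then 1 else 0)) = tt i" for tt :: "int \<Rightarrow> 'a"
  proof -
    have "(\<Prod>j\<in>H. tt j ^ (if j = i then 1 else 0)) = (\<Prod>j\<in>H. if j = i then tt j else 1)"
      by (rule prod.cong) auto
    also have "\<dots> = tt i" using assms(1,2) by (simp add: prod.delta)
    finally show ?thesis .
  qed
  show "\<exists>e. \<forall>x (tt :: int \<Rightarrow> 'a). (\<forall>i\<in>H. tt i \<noteq> 0) \<longrightarrow>
      mat_apply M (d i) t (\<lambda>n. tt i * x i n) r = (\<Prod>i\<in>H. tt i ^ e i) * mat_apply M (d i) t (x i) r"
    by (rule exI[of _ "\<lambda>j. if j = i then 1 else 0"]) (simp add: p ma_scale)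
qed

lemma multihom_mult:
  assumes "multihom H d f" "multihom H d g"
  shows "multihom H d (\<lambda>x. f x * g x)"
proof -
  obtain e1 where e1: "\<forall>x (t :: int \<Rightarrow> 'a). (\<forall>i\<in>H. t i \<noteq> 0) \<longrightarrow>
         f (\<lambda>i n. t i * x i n) = (\<Prod>i\<in>H. t i ^ e1 i) * f x"
    using assms(1) unfolding multihom_def by blast
  obtain e2 where e2: "\<forall>x (t :: int \<Rightarrow> 'a). (\<forall>i\<in>H. t i \<noteq> 0) \<longrightarrow>
         g (\<lambda>i n. t i * x i n) = (\<Prod>i\<in>H. t i ^ e2 i) * g x"
    using assms(2) unfolding multihom_def by blast
  have pf: "(\<lambda>x. f x * g x) \<in> polyfun H d" using assms pf_mult unfolding multihom_def by blast
  show ?thesis unfolding multihom_def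
  proof (intro conjI pf exI[of _ "\<lambda>i. e1 i + e2 i"] allI impI)
    fix x and t :: "int \<Rightarrow> 'a" assume t: "\<forall>i\<in>H. t i \<noteq> 0"
    show "f (\<lambda>i n. t i * x i n) * g (\<lambda>i n. t i * x i n) = (\<Prod>i\<in>H. t i ^ (e1 i + e2 i)) * (f x * g x)"
      using e1 e2 t by (simp add: power_add prod.distrib algebra_simps)
  qed
qed

lemma multihom_one: "multihom H d (\<lambda>x. 1)"
  unfolding multihom_def by (auto intro: pf_const exI[of _ "\<lambda>i. 0"])

lemma multihom_prod:
  "finite I \<Longrightarrow> (\<forall>k\<in>I. multihom H d (g k)) \<Longrightarrow> multihom H d (\<lambda>x. \<Prod>k\<in>I. g k x)"
proof (induct I rule: finite_induct)
  case empty then show ?case by (simp add: multihom_one)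
next
  case (insert a F)
  then have "multihom H d (\<lambda>x. g a x * (\<Prod>k\<in>F. g k x))" by (simp add: multihom_mult)
  then show ?case using insert by simp
qed

lemma bad_range:
  assumes W: "W \<in> LP d U D" and bd: "bad d U D W i"
    and injR: "\<forall>j\<ge>b. inj_on (down_map d D j) (cspace d (j+1))"
    and injL: "\<forall>j<a. inj_on (up_map d U j) (cspace d j)"
  shows "a \<le> i \<and> i < b"
proof (rule ccontr)
  assume "\<not> (a \<le> i \<and> i < b)"
  then consider "i < a" | "b \<le> i" by linarith
  then show False
  proof cases
    case 1
    obtain x where x: "x \<in> W i" "x \<noteq> (\<lambda>n. 0)" using line_ex[OF LP_line[OF W]] by blast
    have "x \<in> cspace d i" using line_csp[OF LP_line[OF W]] x(1) by blast
    moreover have "(\<lambda>n. 0) \<in> cspace d i" by (simp add: cspace_def)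
    moreover have "up_map d U i x = up_map d U i (\<lambda>n. 0)" using bd x(1) by (simp add: bad_def up_zero)
    moreover have inj: "inj_on (up_map d U i) (cspace d i)" using injL 1 by blast
    ultimately have "x = (\<lambda>n. 0)" by (metis inj_onD)
    with x(2) show False by simp
  next
    case 2
    obtain x where x: "x \<in> W (i+1)" "x \<noteq> (\<lambda>n. 0)" using line_ex[OF LP_line[OF W]] by blast
    have "x \<in> cspace d (i+1)" using line_csp[OF LP_line[OF W]] x(1) by blast
    moreover have "(\<lambda>n. 0) \<in> cspace d (i+1)" by (simp add: cspace_def)
    moreover have "down_map d D i x = down_map d D i (\<lambda>n. 0)" using bd x(1) by (simp add: bad_def dn_zero)
    moreover have inj: "inj_on (down_map d D i) (cspace d (i+1))" using injR 2 by blast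
    ultimately have "x = (\<lambda>n. 0)" by (metis inj_onD)
    with x(2) show False by simp
  qed
qed

lemma rep_ex:
  assumes W: "W \<in> LP d U D"
  shows "\<exists>x. \<forall>i. x i \<in> W i \<and> x i \<noteq> (\<lambda>n. 0)"
proof -
  have "\<forall>i. \<exists>y. y \<in> W i \<and> y \<noteq> (\<lambda>n. 0)" using line_ex[OF LP_line[OF W]] by blast
  then show ?thesis by metis
qed

lemma bad_rep:
  assumes W: "W \<in> LP d U D" and x1: "x1 \<in> W i" "x1 \<noteq> (\<lambda>n. 0)" and x2: "x2 \<in> W (i+1)" "x2 \<noteq> (\<lambda>n. 0)"
  shows "bad d U D W i \<longleftrightarrow> up_map d U i x1 = (\<lambda>n. 0) \<and> down_map d D i x2 = (\<lambda>n. 0)"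
proof -
  have W1: "W i = sp x1" using line_sp[OF LP_line[OF W] x1] .
  have W2: "W (i+1) = sp x2" using line_sp[OF LP_line[OF W] x2] .
  show ?thesis
  proof
    assume "bad d U D W i" then show "up_map d U i x1 = (\<lambda>n. 0) \<and> down_map d D i x2 = (\<lambda>n. 0)"
      using x1 x2 by (simp add: bad_def)
  next
    assume a: "up_map d U i x1 = (\<lambda>n. 0) \<and> down_map d D i x2 = (\<lambda>n. 0)"
    have "up_map d U i y = (\<lambda>n. 0)" if "y \<in> W i" for y
    proof -
      from that obtain c where "y = (\<lambda>n. c * x1 n)" unfolding W1 by (rule sp_memE)
      then show ?thesis using a by (simp add: up_scale)
    qed
    moreover have "down_map d D i y = (\<lambda>n. 0)" if "y \<in> W (i+1)" for y
    proof -
      from that obtain c where "y = (\<lambda>n. c * x2 n)" unfolding W2 by (rule sp_memE)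
      then show ?thesis using a by (simp add: dn_scale)
    qed
    ultimately show "bad d U D W i" by (simp add: bad_def)
  qed
qed

lemma csp_zero_iff: "v \<in> cspace d j \<Longrightarrow> v = (\<lambda>n. 0) \<longleftrightarrow> (\<forall>r<d j. v r = 0)"
  by (auto simp: cspace_def fun_eq_iff) (metis not_le)

definition Gset :: "(int \<Rightarrow> nat) \<Rightarrow> (int \<Rightarrow> nat \<Rightarrow> nat \<Rightarrow> 'a::field) \<Rightarrow> (int \<Rightarrow> nat \<Rightarrow> nat \<Rightarrow> 'a)
   \<Rightarrow> int \<Rightarrow> ((int \<Rightarrow> nat \<Rightarrow> 'a) \<Rightarrow> 'a) set" where
  "Gset d U D i = (\<lambda>r x. up_map d U i (x i) r) ` {..<d (i+1)} \<union> (\<lambda>s x. down_map d D i (x (i+1)) s) ` {..<d i}"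

lemma Gset_vanish:
  "(\<forall>g\<in>Gset d U D i. g x = 0) \<longleftrightarrow> up_map d U i (x i) = (\<lambda>n. 0) \<and> down_map d D i (x (i+1)) = (\<lambda>n. 0)"
  using csp_zero_iff[OF up_csp, of d U i "x i"] csp_zero_iff[OF dn_csp, of d D i "x (i+1)"]
  by (auto simp: Gset_def)

lemma Gset_multihom:
  assumes "i \<in> {a..<b}"
  shows "\<forall>g\<in>Gset d U D i. multihom {a..b} d g"
  using assms multihom_lin[of "{a..b}" i _ "d (i+1)" d "U i"] multihom_lin[of "{a..b}" "i+1" _ "d i" d "D i"]
  by (auto simp: Gset_def up_map_def down_map_def)

lemma open_part:
  fixes U D :: "int \<Rightarrow> nat \<Rightarrow> nat \<Rightarrow> 'a::field"
  assumes col: "colinked_chain d U D"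
    and injR: "\<forall>j\<ge>b. inj_on (down_map d D j) (cspace d (j+1))"
    and injL: "\<forall>j<a. inj_on (up_map d U j) (cspace d j)"
  shows "zariski_open_in {a..b} d (LP d U D) (LP_exact d U D)"
proof -
  define F where "F = {f. \<exists>g. (\<forall>i\<in>{a..<b}. g i \<in> Gset d U D i) \<and> f = (\<lambda>x. \<Prod>i\<in>{a..<b}. g i x)}"
  have Fm: "\<forall>f\<in>F. multihom {a..b} d f"
  proof
    fix f assume "f \<in> F"
    then obtain g where g: "\<forall>i\<in>{a..<b}. g i \<in> Gset d U D i" "f = (\<lambda>x. \<Prod>i\<in>{a..<b}. g i x)"
      unfolding F_def by blast
    have "\<forall>k\<in>{a..<b}. multihom {a..b} d (g k)" using g(1) Gset_multihom by blast
    then show "multihom {a..b} d f" unfolding g(2) by (intro multihom_prod) auto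
  qed
  have eq: "LP d U D - LP_exact d U D = {W\<in>LP d U D. \<forall>f\<in>F. \<forall>x. (\<forall>i\<in>{a..b}. x i \<in> W i \<and> x i \<noteq> (\<lambda>n. 0)) \<longrightarrow> f x = 0}"
  proof (rule Set.set_eqI, rule iffI)
    fix W assume "W \<in> LP d U D - LP_exact d U D"
    then have W: "W \<in> LP d U D" and ne: "\<not> exact_on W (up_map d U) (down_map d D)"
      by (auto simp: LP_exact_def)
    obtain i where bd: "bad d U D W i" using ne exact_iff_nobad[OF col W] by blast
    have ir: "i \<in> {a..<b}" using bad_range[OF W bd injR injL] by simp
    show "W \<in> {W\<in>LP d U D. \<forall>f\<in>F. \<forall>x. (\<forall>i\<in>{a..b}. x i \<in> W i \<and> x i \<noteq> (\<lambda>n. 0)) \<longrightarrow> f x = 0}"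
    proof (intro CollectI conjI W ballI allI impI)
      fix f x assume f: "f \<in> F" and x: "\<forall>i\<in>{a..b}. x i \<in> W i \<and> x i \<noteq> (\<lambda>n. 0)"
      obtain g where g: "\<forall>i\<in>{a..<b}. g i \<in> Gset d U D i" "f = (\<lambda>x. \<Prod>i\<in>{a..<b}. g i x)"
        using f unfolding F_def by blast
      have xi: "x i \<in> W i" "x i \<noteq> (\<lambda>n. 0)" "x (i+1) \<in> W (i+1)" "x (i+1) \<noteq> (\<lambda>n. 0)"
        using x ir by auto
      have "up_map d U i (x i) = (\<lambda>n. 0) \<and> down_map d D i (x (i+1)) = (\<lambda>n. 0)"
        using bad_rep[OF W xi] bd by simp
      then have "g i x = 0" using Gset_vanish[of d U D i x] g(1) ir by blast
      then show "f x = 0" using g(2) ir by (auto simp: prod_zero_iff)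
    qed
  next
    fix W assume "W \<in> {W\<in>LP d U D. \<forall>f\<in>F. \<forall>x. (\<forall>i\<in>{a..b}. x i \<in> W i \<and> x i \<noteq> (\<lambda>n. 0)) \<longrightarrow> f x = 0}"
    then have W: "W \<in> LP d U D" and van: "\<forall>f\<in>F. \<forall>x. (\<forall>i\<in>{a..b}. x i \<in> W i \<and> x i \<noteq> (\<lambda>n. 0)) \<longrightarrow> f x = 0"
      by auto
    obtain x where x: "\<forall>i. x i \<in> W i \<and> x i \<noteq> (\<lambda>n. 0)" using rep_ex[OF W] by blast
    show "W \<in> LP d U D - LP_exact d U D"
    proof (rule ccontr)
      assume "W \<notin> LP d U D - LP_exact d U D"
      then have "exact_on W (up_map d U) (down_map d D)" using W by (simp add: LP_exact_def)
      then have nb: "\<forall>i. \<not> bad d U D W i" using exact_iff_nobad[OF col W] by blast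
      have "\<forall>i. \<exists>h. i \<in> {a..<b} \<longrightarrow> h \<in> Gset d U D i \<and> h x \<noteq> 0"
      proof
        fix i
        have "\<not> (up_map d U i (x i) = (\<lambda>n. 0) \<and> down_map d D i (x (i+1)) = (\<lambda>n. 0))"
          using bad_rep[OF W] x nb by blast
        then show "\<exists>h. i \<in> {a..<b} \<longrightarrow> h \<in> Gset d U D i \<and> h x \<noteq> 0"
          using Gset_vanish[of d U D i x] by blast
      qed
      then have "\<exists>g. \<forall>i. i \<in> {a..<b} \<longrightarrow> g i \<in> Gset d U D i \<and> g i x \<noteq> 0" by (rule choice)
      then obtain g where g: "\<forall>i. i \<in> {a..<b} \<longrightarrow> g i \<in> Gset d U D i \<and> g i x \<noteq> 0" by blast
      have Fg: "(\<lambda>x. \<Prod>i\<in>{a..<b}. g i x) \<in> F" unfolding F_def using g by blast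
      have xr: "\<forall>i\<in>{a..b}. x i \<in> W i \<and> x i \<noteq> (\<lambda>n. 0)" using x by blast
      have "(\<Prod>i\<in>{a..<b}. g i x) = 0" using bspec[OF van Fg, rule_format, of x] xr by blast
      then show False using g by (simp add: prod_zero_iff)
    qed
  qed
  have sub: "LP_exact d U D \<subseteq> LP d U D" by (auto simp: LP_exact_def)
  show ?thesis
    unfolding zariski_open_in_def zariski_closed_in_def
    using sub Fm eq by blast
qed



lemma alg_closed_infinite: "infinite (UNIV :: 'a::alg_closed_field set)"
proof
  assume fin: "finite (UNIV :: 'a set)"
  define P :: "'a poly" where "P = (\<Prod>a\<in>UNIV. [:-a, 1:])"
  have "degree P = (\<Sum>a\<in>(UNIV::'a set). degree [:-a, 1:])"
    unfolding P_def by (rule degree_prod_eq_sum_degree) auto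
  also have "\<dots> = card (UNIV :: 'a set)" by simp
  finally have dP: "degree P = card (UNIV :: 'a set)" .
  have "card (UNIV :: 'a set) > 0" using fin by (simp add: card_gt_0_iff)
  then have dP0: "degree P > 0" using dP by simp
  have "degree (P + 1) = degree P" using dP0 by (intro degree_add_eq_left) simp
  then have "degree (P + 1) > 0" using dP0 by simp
  then obtain x where "poly (P + 1) x = 0" using alg_closed_imp_poly_has_root by blast
  moreover have "poly P x = 0"
    unfolding P_def poly_prod using fin by (auto simp: prod_zero_iff intro: bexI[of _ x])
  ultimately show False by simp
qed

lemma pf_poly:
  fixes A B :: "int \<Rightarrow> nat \<Rightarrow> 'a::field"
  shows "f \<in> polyfun H d \<Longrightarrow> \<exists>p. \<forall>t. f (\<lambda>i n. A i n + t * B i n) = poly p t"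
proof (induct f rule: polyfun.induct)
  case (pf_const c) then show ?case by (intro exI[of _ "[:c:]"]) simp
next
  case (pf_var i n) then show ?case by (intro exI[of _ "[:A i n, B i n:]"]) simp
next
  case (pf_add f g)
  then obtain p q where "\<forall>t. f (\<lambda>i n. A i n + t * B i n) = poly p t" "\<forall>t. g (\<lambda>i n. A i n + t * B i n) = poly q t"
    by blast
  then show ?case by (intro exI[of _ "p + q"]) simp
next
  case (pf_mult f g)
  then obtain p q where "\<forall>t. f (\<lambda>i n. A i n + t * B i n) = poly p t" "\<forall>t. g (\<lambda>i n. A i n + t * B i n) = poly q t"
    by blast
  then show ?case by (intro exI[of _ "p * q"]) simp
qed

lemma poly_cofinite_zero:
  fixes p :: "'a::field poly"
  assumes "infinite (UNIV :: 'a set)" "finite Z" "\<forall>t. t \<notin> Z \<longrightarrow> poly p t = 0"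
  shows "p = 0"
proof (rule ccontr)
  assume "p \<noteq> 0"
  then have "finite {t. poly p t = 0}" by (rule poly_roots_finite)
  moreover have "UNIV - Z \<subseteq> {t. poly p t = 0}" using assms(3) by blast
  ultimately have "finite (UNIV - Z)" by (rule finite_subset[rotated])
  then have "finite (UNIV :: 'a set)" using assms(2) by (metis Diff_UNIV finite_Diff2 finite.emptyI)
  then show False using assms(1) by simp
qed

lemma homog_rep:
  fixes A x :: "int \<Rightarrow> nat \<Rightarrow> 'a::field"
  assumes mh: "multihom H d f"
    and rA: "\<forall>i\<in>H. A i \<in> W i \<and> A i \<noteq> (\<lambda>n. 0)" and rx: "\<forall>i\<in>H. x i \<in> W i \<and> x i \<noteq> (\<lambda>n. 0)"
    and lines: "\<forall>i. is_line d i (W i)" and fA: "f A = 0"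
  shows "f x = 0"
proof -
  obtain e where e: "\<forall>x (t :: int \<Rightarrow> 'a). (\<forall>i\<in>H. t i \<noteq> 0) \<longrightarrow>
         f (\<lambda>i n. t i * x i n) = (\<Prod>i\<in>H. t i ^ e i) * f x"
    using mh unfolding multihom_def by blast
  have pf: "f \<in> polyfun H d" using mh unfolding multihom_def by blast
  have ex: "\<exists>c. x i = (\<lambda>n. c * A i n)" if "i \<in> H" for i
  proof -
    have "W i = sp (A i)" using line_sp[OF lines[rule_format, of i]] rA that by blast
    then have "x i \<in> sp (A i)" using rx that by blast
    then show ?thesis by (rule sp_memE) blast
  qed
  define s where "s i = (if i \<in> H then (SOME c. x i = (\<lambda>n. c * A i n)) else 1)" for i
  have s: "x i = (\<lambda>n. s i * A i n)" if "i \<in> H" for i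
    using someI_ex[OF ex[OF that]] that by (simp add: s_def)
  have s0: "\<forall>i\<in>H. s i \<noteq> 0"
  proof
    fix i assume i: "i \<in> H"
    show "s i \<noteq> 0"
    proof
      assume "s i = 0"
      then have "x i = (\<lambda>n. 0)" using s[OF i] by simp
      then show False using rx i by blast
    qed
  qed
  have "f (\<lambda>i n. s i * A i n) = (\<Prod>i\<in>H. s i ^ e i) * f A" using e s0 by blast
  then have "f (\<lambda>i n. s i * A i n) = 0" using fA by simp
  moreover have "f x = f (\<lambda>i n. s i * A i n)"
    by (rule pf_local[OF pf]) (simp add: s)
  ultimately show ?thesis by simp
qed



definition imd :: "(int \<Rightarrow> nat) \<Rightarrow> (int \<Rightarrow> nat \<Rightarrow> nat \<Rightarrow> 'a::field) \<Rightarrow> int \<Rightarrow> (nat \<Rightarrow> 'a) \<Rightarrow> bool" where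
  "imd d D j z \<longleftrightarrow> z \<in> down_map d D j ` cspace d (j+1)"

lemma pre_lemma:
  assumes col: "colinked_chain d U D" and z: "imd d D j z"
  shows "\<exists>z'. z' \<in> cspace d (j+1) \<and> imd d D (j+1) z' \<and> down_map d D j z' = z"
proof -
  obtain w where w: "w \<in> cspace d (j+1)" "z = down_map d D j w" using z unfolding imd_def by blast
  obtain y u where yu: "y \<in> cspace d (j+1+1)" "u \<in> cspace d j"
    "w = (\<lambda>n. down_map d D (j+1) y n + up_map d U j u n)"
    using col w(1) unfolding colinked_chain_def by fastforce
  have "down_map d D j w = (\<lambda>n. down_map d D j (down_map d D (j+1) y) n + down_map d D j (up_map d U j u) n)"
    unfolding yu(3) by (rule dn_add)
  also have "\<dots> = down_map d D j (down_map d D (j+1) y)"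
    using col_du[OF col yu(2)] by simp
  finally have e: "down_map d D j (down_map d D (j+1) y) = z" using w(2) by simp
  show ?thesis
    by (rule exI[of _ "down_map d D (j+1) y"]) (use e yu(1) dn_csp in \<open>auto simp: imd_def\<close>)
qed

lemma imd_up: "colinked_chain d U D \<Longrightarrow> imd d D j z \<Longrightarrow> up_map d U j z = (\<lambda>n. 0)"
  unfolding imd_def using col_ud by blast

lemma imd_zero: "imd d D j (\<lambda>n. 0)"
  unfolding imd_def by (rule image_eqI[of _ _ "\<lambda>n. 0"]) (simp_all add: dn_zero cspace_def)

primrec crv :: "(int \<Rightarrow> nat) \<Rightarrow> (int \<Rightarrow> nat \<Rightarrow> nat \<Rightarrow> 'a::field) \<Rightarrow> (int \<Rightarrow> nat \<Rightarrow> nat \<Rightarrow> 'a)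
    \<Rightarrow> (int \<Rightarrow> (nat \<Rightarrow> 'a) set) \<Rightarrow> int \<Rightarrow> ((nat \<Rightarrow> 'a) \<times> (nat \<Rightarrow> 'a)) \<Rightarrow> nat \<Rightarrow> ((nat \<Rightarrow> 'a) \<times> (nat \<Rightarrow> 'a))" where
  "crv d U D W i0 s0 0 = s0"
| "crv d U D W i0 s0 (Suc k) =
    (if up_map d U (i0 + 1 + int k) (fst (crv d U D W i0 s0 k)) \<noteq> (\<lambda>n. 0)
     then (up_map d U (i0 + 1 + int k) (fst (crv d U D W i0 s0 k)), (\<lambda>n. 0))
     else (SOME u. u \<in> W (i0 + 1 + int k + 1) \<and> down_map d D (i0 + 1 + int k) u = fst (crv d U D W i0 s0 k),
           SOME z'. z' \<in> cspace d (i0 + 1 + int k + 1) \<and> imd d D (i0 + 1 + int k + 1) z'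
              \<and> down_map d D (i0 + 1 + int k) z' = snd (crv d U D W i0 s0 k)))"

lemma idx_Suc: "i0 + 1 + int (Suc k) = i0 + 1 + int k + 1"
  by simp

lemma crv_inv:
  assumes col: "colinked_chain d U D" and W: "W \<in> LP d U D" and nb: "\<forall>j>i0. \<not> bad d U D W j"
    and s0: "fst s0 \<in> W (i0+1)" "fst s0 \<noteq> (\<lambda>n. 0)" "snd s0 \<in> cspace d (i0+1)" "imd d D (i0+1) (snd s0)"
  shows "fst (crv d U D W i0 s0 k) \<in> W (i0 + 1 + int k) \<and> fst (crv d U D W i0 s0 k) \<noteq> (\<lambda>n. 0)
       \<and> snd (crv d U D W i0 s0 k) \<in> cspace d (i0 + 1 + int k) \<and> imd d D (i0 + 1 + int k) (snd (crv d U D W i0 s0 k))"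
proof (induct k)
  case 0 then show ?case using s0 by simp
next
  case (Suc k)
  define j where "j = i0 + 1 + int k"
  define y where "y = fst (crv d U D W i0 s0 k)"
  define z where "z = snd (crv d U D W i0 s0 k)"
  have IH: "y \<in> W j" "y \<noteq> (\<lambda>n. 0)" "z \<in> cspace d j" "imd d D j z"
    using Suc by (simp_all add: j_def y_def z_def)
  have jS: "i0 + 1 + int (Suc k) = j + 1" by (simp add: j_def)
  show ?case
  proof (cases "up_map d U j y \<noteq> (\<lambda>n. 0)")
    case True
    have c: "crv d U D W i0 s0 (Suc k) = (up_map d U j y, (\<lambda>n. 0))"
      using True by (simp add: j_def y_def)
    show ?thesis unfolding c jS
      using True LP_up[OF W IH(1)] imd_zero by (simp add: cspace_def)
  next
    case False
    then have up0: "up_map d U j y = (\<lambda>n. 0)" by simp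
    have c: "crv d U D W i0 s0 (Suc k) = (SOME u. u \<in> W (j + 1) \<and> down_map d D j u = y,
           SOME z'. z' \<in> cspace d (j + 1) \<and> imd d D (j + 1) z' \<and> down_map d D j z' = z)"
      using False by (simp add: j_def y_def z_def)
    have nbj: "\<not> bad d U D W j" using nb by (simp add: j_def)
    obtain v where v: "v \<in> W (j+1)" "v \<noteq> (\<lambda>n. 0)" using line_ex[OF LP_line[OF W]] by blast
    have dv: "down_map d D j v \<noteq> (\<lambda>n. 0)" using bad_rep[OF W IH(1,2) v] nbj up0 by simp
    have "down_map d D j v \<in> sp y" using LP_dn[OF W v(1)] line_sp[OF LP_line[OF W] IH(1,2)] by simp
    then obtain c where cv: "down_map d D j v = (\<lambda>n. c * y n)" by (rule sp_memE)
    have c0: "c \<noteq> 0" using dv cv by auto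
    define u where "u = (\<lambda>n. inverse c * v n)"
    have uW: "u \<in> W (j+1)" unfolding u_def by (rule line_scale[OF LP_line[OF W] v(1)])
    have du: "down_map d D j u = y" unfolding u_def dn_scale cv using c0 by (simp add: fun_eq_iff)
    have exu: "\<exists>u. u \<in> W (j + 1) \<and> down_map d D j u = y" using uW du by blast
    have exz: "\<exists>z'. z' \<in> cspace d (j + 1) \<and> imd d D (j + 1) z' \<and> down_map d D j z' = z"
      by (rule pre_lemma[OF col IH(4)])
    have u1: "(SOME u. u \<in> W (j + 1) \<and> down_map d D j u = y) \<in> W (j+1)"
      and u2: "down_map d D j (SOME u. u \<in> W (j + 1) \<and> down_map d D j u = y) = y"
      using someI_ex[OF exu] by blast+
    have u3: "(SOME u. u \<in> W (j + 1) \<and> down_map d D j u = y) \<noteq> (\<lambda>n. 0)"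
      using u2 IH(2) dn_zero by metis
    show ?thesis unfolding c jS using u1 u3 someI_ex[OF exz] by simp
  qed
qed

lemma exu_lemma:
  assumes W: "W \<in> LP d U D" and nbj: "\<not> bad d U D W j" and y: "y \<in> W j" "y \<noteq> (\<lambda>n. 0)"
    and up0: "up_map d U j y = (\<lambda>n. 0)"
  shows "\<exists>u. u \<in> W (j + 1) \<and> down_map d D j u = y"
proof -
  obtain v where v: "v \<in> W (j+1)" "v \<noteq> (\<lambda>n. 0)" using line_ex[OF LP_line[OF W]] by blast
  have dv: "down_map d D j v \<noteq> (\<lambda>n. 0)" using bad_rep[OF W y v] nbj up0 by simp
  have "down_map d D j v \<in> sp y" using LP_dn[OF W v(1)] line_sp[OF LP_line[OF W] y] by simp
  then obtain c where cv: "down_map d D j v = (\<lambda>n. c * y n)" by (rule sp_memE)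
  have c0: "c \<noteq> 0" using dv cv by auto
  define u where "u = (\<lambda>n. inverse c * v n)"
  have uW: "u \<in> W (j+1)" unfolding u_def by (rule line_scale[OF LP_line[OF W] v(1)])
  have du: "down_map d D j u = y" unfolding u_def dn_scale cv using c0 by (simp add: fun_eq_iff)
  show ?thesis using uW du by blast
qed

lemma crv_step:
  fixes k :: nat
  assumes col: "colinked_chain d U D" and W: "W \<in> LP d U D" and nb: "\<forall>j>i0. \<not> bad d U D W j"
    and s0: "fst s0 \<in> W (i0+1)" "fst s0 \<noteq> (\<lambda>n. 0)" "snd s0 \<in> cspace d (i0+1)" "imd d D (i0+1) (snd s0)"
  defines "y \<equiv> fst (crv d U D W i0 s0 k)" and "z \<equiv> snd (crv d U D W i0 s0 k)"
    and "y' \<equiv> fst (crv d U D W i0 s0 (Suc k))" and "z' \<equiv> snd (crv d U D W i0 s0 (Suc k))"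
    and "j \<equiv> i0 + 1 + int k"
  shows "(up_map d U j y \<noteq> (\<lambda>n. 0) \<and> y' = up_map d U j y \<and> z' = (\<lambda>n. 0))
       \<or> (up_map d U j y = (\<lambda>n. 0) \<and> down_map d D j y' = y \<and> down_map d D j z' = z)"
proof (cases "up_map d U j y = (\<lambda>n. 0)")
  case True
  have IH: "y \<in> W j" "y \<noteq> (\<lambda>n. 0)" "z \<in> cspace d j" "imd d D j z"
    using crv_inv[OF col W nb s0, of k] by (simp_all add: j_def y_def z_def)
  have nbj: "\<not> bad d U D W j" using nb by (simp add: j_def)
  have exu: "\<exists>u. u \<in> W (j + 1) \<and> down_map d D j u = y" by (rule exu_lemma[OF W nbj IH(1,2) True])
  have exz: "\<exists>z'. z' \<in> cspace d (j + 1) \<and> imd d D (j + 1) z' \<and> down_map d D j z' = z"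
    by (rule pre_lemma[OF col IH(4)])
  have c: "crv d U D W i0 s0 (Suc k) = (SOME u. u \<in> W (j + 1) \<and> down_map d D j u = y,
           SOME z'. z' \<in> cspace d (j + 1) \<and> imd d D (j + 1) z' \<and> down_map d D j z' = z)"
    using True by (simp add: j_def y_def z_def)
  show ?thesis
    using True someI_ex[OF exu] someI_ex[OF exz] unfolding y'_def z'_def c by simp
next
  case False then show ?thesis by (simp add: j_def y_def y'_def z'_def)
qed



lemma img_sp:
  assumes "\<And>c x. h (\<lambda>n. c * x n) = (\<lambda>n. c * h x n)" "h v \<in> L" "\<And>y c. y \<in> L \<Longrightarrow> (\<lambda>n. c * y n) \<in> L"
  shows "h ` sp v \<subseteq> L"
proof
  fix w assume "w \<in> h ` sp v"
  then obtain u where u: "u \<in> sp v" "w = h u" by blast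
  from u(1) obtain c where "u = (\<lambda>n. c * v n)" by (rule sp_memE)
  then have "w = (\<lambda>n. c * h v n)" using u(2) assms(1) by simp
  then show "w \<in> L" using assms(2,3) by simp
qed

lemma curve_step:
  fixes U D :: "int \<Rightarrow> nat \<Rightarrow> nat \<Rightarrow> 'a::field"
  assumes col: "colinked_chain d U D"
    and ex3: "\<forall>i. \<forall>x\<in>cspace d i. up_map d U i x = (\<lambda>_. 0) \<longrightarrow> x \<in> down_map d D i ` cspace d (i+1)"
    and inf: "infinite (UNIV :: 'a set)"
    and W: "W \<in> LP d U D" and bd: "bad d U D W i0" and nb: "\<forall>j>i0. \<not> bad d U D W j"
    and mh: "multihom H d f"
    and IH: "\<forall>W'\<in>LP d U D. (\<forall>j. bad d U D W' j \<longrightarrow> bad d U D W j \<and> j \<noteq> i0) \<longrightarrow>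
               (\<forall>x. (\<forall>i\<in>H. x i \<in> W' i \<and> x i \<noteq> (\<lambda>n. 0)) \<longrightarrow> f x = 0)"
  shows "\<forall>x. (\<forall>i\<in>H. x i \<in> W i \<and> x i \<noteq> (\<lambda>n. 0)) \<longrightarrow> f x = 0"
proof -
  obtain x0 where x0: "\<forall>i. x0 i \<in> W i \<and> x0 i \<noteq> (\<lambda>n. 0)" using rep_ex[OF W] by blast
  define w0 where "w0 = x0 i0"
  have w0: "w0 \<in> W i0" "w0 \<noteq> (\<lambda>n. 0)" using x0 by (simp_all add: w0_def)
  have w0c: "w0 \<in> cspace d i0" using line_csp[OF LP_line[OF W]] w0(1) by blast
  have upw0: "up_map d U i0 w0 = (\<lambda>n. 0)" using bd w0(1) by (simp add: bad_def)
  have imw0: "imd d D i0 w0" using ex3 w0c upw0 by (simp add: imd_def)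
  obtain z0 where z0: "z0 \<in> cspace d (i0+1)" "imd d D (i0+1) z0" "down_map d D i0 z0 = w0"
    using pre_lemma[OF col imw0] by blast
  define s0 where "s0 = (x0 (i0+1), z0)"
  have s0: "fst s0 \<in> W (i0+1)" "fst s0 \<noteq> (\<lambda>n. 0)" "snd s0 \<in> cspace d (i0+1)" "imd d D (i0+1) (snd s0)"
    using x0 z0 by (simp_all add: s0_def)
  define cr where "cr = crv d U D W i0 s0"
  have inv: "fst (cr k) \<in> W (i0+1+int k) \<and> fst (cr k) \<noteq> (\<lambda>n. 0) \<and> snd (cr k) \<in> cspace d (i0+1+int k)
      \<and> imd d D (i0+1+int k) (snd (cr k))" for k
    unfolding cr_def by (rule crv_inv[OF col W nb s0])
  have stp: "(up_map d U (i0+1+int k) (fst (cr k)) \<noteq> (\<lambda>n. 0) \<and> fst (cr (Suc k)) = up_map d U (i0+1+int k) (fst (cr k))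
        \<and> snd (cr (Suc k)) = (\<lambda>n. 0))
      \<or> (up_map d U (i0+1+int k) (fst (cr k)) = (\<lambda>n. 0) \<and> down_map d D (i0+1+int k) (fst (cr (Suc k))) = fst (cr k)
        \<and> down_map d D (i0+1+int k) (snd (cr (Suc k))) = snd (cr k))" for k
    unfolding cr_def by (rule crv_step[OF col W nb s0])
  have upz: "up_map d U (i0+1+int k) (snd (cr k)) = (\<lambda>n. 0)" for k
    using inv[of k] imd_up[OF col] by blast
  have ycs: "fst (cr k) \<in> cspace d (i0+1+int k)" for k
    using inv[of k] line_csp[OF LP_line[OF W]] by blast
  define Xk where "Xk t k = (\<lambda>n. fst (cr k) n + t * snd (cr k) n)" for t k
  have nz: "Xk t k \<noteq> (\<lambda>n. 0)" if nz0: "Xk t 0 \<noteq> (\<lambda>n. 0)" for t k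
  proof (induct k)
    case 0 show ?case using nz0 by simp
  next
    case (Suc k)
    from stp[of k] show ?case
    proof
      assume a: "up_map d U (i0+1+int k) (fst (cr k)) \<noteq> (\<lambda>n. 0) \<and> fst (cr (Suc k)) = up_map d U (i0+1+int k) (fst (cr k))
        \<and> snd (cr (Suc k)) = (\<lambda>n. 0)"
      then show ?thesis by (simp add: Xk_def)
    next
      assume b: "up_map d U (i0+1+int k) (fst (cr k)) = (\<lambda>n. 0) \<and> down_map d D (i0+1+int k) (fst (cr (Suc k))) = fst (cr k)
        \<and> down_map d D (i0+1+int k) (snd (cr (Suc k))) = snd (cr k)"
      have "down_map d D (i0+1+int k) (Xk t (Suc k)) = Xk t k"
        using b by (simp add: Xk_def dn_add dn_scale)
      then show ?thesis using Suc dn_zero by metis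
    qed
  qed
  define Z where "Z = {t. Xk t 0 = (\<lambda>n. 0)}"
  have Zfin: "finite Z"
  proof -
    have uniq: "t = s" if "t \<in> Z" "s \<in> Z" for t s
    proof (rule ccontr)
      assume ts: "t \<noteq> s"
      have e1: "fst s0 n + t * z0 n = 0" and e2: "fst s0 n + s * z0 n = 0" for n
        using that by (simp_all add: Z_def Xk_def cr_def s0_def fun_eq_iff)
      have "t * z0 n = s * z0 n" for n using e1[of n] e2[of n] by (metis add_left_cancel)
      then have "(t - s) * z0 n = 0" for n by (simp add: left_diff_distrib)
      then have "z0 n = 0" for n using ts by simp
      then have "fst s0 n = 0" for n using e1[of n] by simp
      then show False using s0(2) by (simp add: fun_eq_iff)
    qed
    show ?thesis
    proof (cases "Z = {}")
      case False
      then obtain t where "t \<in> Z" by blast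
      then have "Z \<subseteq> {t}" using uniq by blast
      then show ?thesis by (rule finite_subset) simp
    qed simp
  qed
  define A where "A j = (if j \<le> i0 then x0 j else fst (cr (nat (j - i0 - 1))))" for j
  define B where "B j = (if j \<le> i0 then (\<lambda>n. 0) else snd (cr (nat (j - i0 - 1))))" for j
  define Xf where "Xf t = (\<lambda>j n. A j n + t * B j n)" for t
  have XXk: "Xf t (i0+1+int k) = Xk t k" for t k
    by (simp add: Xf_def A_def B_def Xk_def)
  have Xle: "Xf t j = x0 j" if "j \<le> i0" for t j
    using that by (simp add: Xf_def A_def B_def)
  have gt: "\<exists>k. j = i0 + 1 + int k" if "j > i0" for j
    using that by (intro exI[of _ "nat (j - i0 - 1)"]) simp
  define Wt where "Wt t j = (if j \<le> i0 then W j else sp (Xf t j))" for t j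
  have key: "f (Xf t) = 0" if t0: "t \<noteq> 0" and tZ: "t \<notin> Z" for t
  proof -
    have nzk: "Xk t k \<noteq> (\<lambda>n. 0)" for k using nz tZ Z_def by auto
    have Xcs: "Xk t k \<in> cspace d (i0+1+int k)" for k
      using ycs[of k] inv[of k] by (simp add: Xk_def cspace_def)
    have Wtk: "Wt t (i0+1+int k) = sp (Xk t k)" for k
      by (simp add: Wt_def XXk)
    have Wtk1: "Wt t (i0+1+int k+1) = sp (Xk t (Suc k))" for k
      using Wtk[of "Suc k"] by (simp add: add.assoc)
    have Wtle: "Wt t j = W j" if "j \<le> i0" for j using that by (simp add: Wt_def)
    have lines: "is_line d i (Wt t i)" for i
    proof (cases "i \<le> i0")
      case True then show ?thesis using LP_line[OF W] Wtle by simp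
    next
      case False
      then obtain k where k: "i = i0 + 1 + int k" using gt by force
      show ?thesis unfolding k Wtk is_line_sp using Xcs nzk by blast
    qed
    have spc: "(\<lambda>n. c * y n) \<in> Wt t i" if "y \<in> Wt t i" for y c i
      by (rule line_scale[OF lines that])
    have P: "up_map d U i ` Wt t i \<subseteq> Wt t (i+1) \<and> down_map d D i ` Wt t (i+1) \<subseteq> Wt t i
           \<and> (bad d U D (Wt t) i \<longrightarrow> bad d U D W i \<and> i \<noteq> i0)" for i
    proof -
      consider "i < i0" | "i = i0" | "i > i0" by linarith
      then show ?thesis
      proof cases
        case 1
        then have e: "Wt t i = W i" "Wt t (i+1) = W (i+1)" using Wtle by auto
        show ?thesis unfolding e using LP_up[OF W] LP_dn[OF W] 1
          by (auto simp: bad_def e)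
      next
        case 2
        have e: "Wt t i0 = W i0" "Wt t (i0+1) = sp (Xk t 0)" using Wtle Wtk[of 0] by auto
        have dX: "down_map d D i0 (Xk t 0) = (\<lambda>n. t * w0 n)"
        proof -
          have "down_map d D i0 (fst s0) = (\<lambda>n. 0)" using bd s0(1) by (simp add: bad_def)
          then show ?thesis using z0(3) by (simp add: Xk_def cr_def s0_def dn_add dn_scale)
        qed
        have u: "up_map d U i0 ` W i0 \<subseteq> sp (Xk t 0)" using bd sp_zero by (auto simp: bad_def)
        have dn: "down_map d D i0 ` sp (Xk t 0) \<subseteq> W i0"
          by (rule img_sp[OF dn_scale]) (simp_all add: dX line_scale[OF LP_line[OF W] w0(1)] line_scale[OF LP_line[OF W]])
        have nb0: "\<not> bad d U D (Wt t) i0"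
        proof
          assume "bad d U D (Wt t) i0"
          then have "down_map d D i0 (Xk t 0) = (\<lambda>n. 0)" unfolding bad_def e using sp_self by blast
          then show False using dX t0 w0(2) by (auto simp: fun_eq_iff)
        qed
        show ?thesis unfolding 2 e using u dn nb0 e by simp
      next
        case 3
        then obtain k where k: "i = i0 + 1 + int k" using gt by force
        have e: "Wt t i = sp (Xk t k)" "Wt t (i+1) = sp (Xk t (Suc k))" using Wtk Wtk1 k by auto
        have uX: "up_map d U i (Xk t k) = up_map d U i (fst (cr k))"
          using upz[of k] k by (simp add: Xk_def up_add up_scale)
        from stp[of k] show ?thesis
        proof
          assume a: "up_map d U (i0+1+int k) (fst (cr k)) \<noteq> (\<lambda>n. 0) \<and> fst (cr (Suc k)) = up_map d U (i0+1+int k) (fst (cr k))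
            \<and> snd (cr (Suc k)) = (\<lambda>n. 0)"
          have XS: "Xk t (Suc k) = up_map d U i (fst (cr k))" using a k by (simp add: Xk_def)
          have d0: "down_map d D i (Xk t (Suc k)) = (\<lambda>n. 0)"
            unfolding XS using col_du[OF col ycs[of k]] k by simp
          have u: "up_map d U i ` sp (Xk t k) \<subseteq> sp (Xk t (Suc k))"
            by (rule img_sp[OF up_scale]) (simp_all add: uX XS sp_self sp_scale)
          have dn: "down_map d D i ` sp (Xk t (Suc k)) \<subseteq> sp (Xk t k)"
            by (rule img_sp[OF dn_scale]) (simp_all add: d0 sp_zero sp_scale)
          have nbi: "\<not> bad d U D (Wt t) i"
          proof
            assume "bad d U D (Wt t) i"
            then have "up_map d U i (Xk t k) = (\<lambda>n. 0)" unfolding bad_def e using sp_self by blast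
            then show False using uX a k by simp
          qed
          show ?thesis unfolding e using u dn nbi by simp
        next
          assume b: "up_map d U (i0+1+int k) (fst (cr k)) = (\<lambda>n. 0) \<and> down_map d D (i0+1+int k) (fst (cr (Suc k))) = fst (cr k)
            \<and> down_map d D (i0+1+int k) (snd (cr (Suc k))) = snd (cr k)"
          have u0: "up_map d U i (Xk t k) = (\<lambda>n. 0)" using uX b k by simp
          have dX: "down_map d D i (Xk t (Suc k)) = Xk t k"
            using b k by (simp add: Xk_def dn_add dn_scale)
          have u: "up_map d U i ` sp (Xk t k) \<subseteq> sp (Xk t (Suc k))"
            by (rule img_sp[OF up_scale]) (simp_all add: u0 sp_zero sp_scale)
          have dn: "down_map d D i ` sp (Xk t (Suc k)) \<subseteq> sp (Xk t k)"
            by (rule img_sp[OF dn_scale]) (simp_all add: dX sp_self sp_scale)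
          have nbi: "\<not> bad d U D (Wt t) i"
          proof
            assume "bad d U D (Wt t) i"
            then have "down_map d D i (Xk t (Suc k)) = (\<lambda>n. 0)" unfolding bad_def e using sp_self by blast
            then show False using dX nzk by simp
          qed
          show ?thesis unfolding e using u dn nbi by simp
        qed
      qed
    qed
    have LPt: "Wt t \<in> LP d U D" unfolding LP_def using lines P by blast
    have rep: "\<forall>i\<in>H. Xf t i \<in> Wt t i \<and> Xf t i \<noteq> (\<lambda>n. 0)"
    proof
      fix i
      show "Xf t i \<in> Wt t i \<and> Xf t i \<noteq> (\<lambda>n. 0)"
      proof (cases "i \<le> i0")
        case True then show ?thesis using Xle Wtle x0 by simp
      next
        case False
        then obtain k where k: "i = i0 + 1 + int k" using gt by force
        show ?thesis unfolding k XXk Wtk using sp_self nzk by simp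
      qed
    qed
    show ?thesis using IH LPt P rep by blast
  qed
  obtain p where p: "\<forall>t. f (\<lambda>i n. A i n + t * B i n) = poly p t"
    using pf_poly[of f H d A B] mh unfolding multihom_def by blast
  have "poly p t = 0" if "t \<notin> insert 0 Z" for t
    using key[of t] that p by (simp add: Xf_def)
  then have "p = 0" using poly_cofinite_zero[OF inf] Zfin by blast
  then have fA: "f A = 0" using p[rule_format, of 0] by simp
  have rA: "\<forall>i. A i \<in> W i \<and> A i \<noteq> (\<lambda>n. 0)"
  proof
    fix i
    show "A i \<in> W i \<and> A i \<noteq> (\<lambda>n. 0)"
    proof (cases "i \<le> i0")
      case True then show ?thesis using x0 by (simp add: A_def)
    next
      case False
      then obtain k where k: "i = i0 + 1 + int k" using gt by force
      show ?thesis unfolding k using inv[of k] by (simp add: A_def)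
    qed
  qed
  show ?thesis
  proof (intro allI impI)
    fix x assume rx: "\<forall>i\<in>H. x i \<in> W i \<and> x i \<noteq> (\<lambda>n. 0)"
    show "f x = 0"
      by (rule homog_rep[OF mh _ rx _ fA]) (use rA LP_line[OF W] in auto)
  qed
qed



lemma dense_part:
  fixes U D :: "int \<Rightarrow> nat \<Rightarrow> nat \<Rightarrow> 'a::field"
  assumes col: "colinked_chain d U D"
    and ex3: "\<forall>i. \<forall>x\<in>cspace d i. up_map d U i x = (\<lambda>_. 0) \<longrightarrow> x \<in> down_map d D i ` cspace d (i+1)"
    and inf: "infinite (UNIV :: 'a set)"
    and injR: "\<forall>j\<ge>b. inj_on (down_map d D j) (cspace d (j+1))"
    and injL: "\<forall>j<a. inj_on (up_map d U j) (cspace d j)"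
  shows "zariski_dense_in {a..b} d (LP d U D) (LP_exact d U D)"
proof -
  have main: "\<forall>x. (\<forall>i\<in>{a..b}. x i \<in> W i \<and> x i \<noteq> (\<lambda>n. 0)) \<longrightarrow> f x = 0"
    if mh: "multihom {a..b} d f"
      and van: "\<forall>W'\<in>LP_exact d U D. \<forall>x. (\<forall>i\<in>{a..b}. x i \<in> W' i \<and> x i \<noteq> (\<lambda>n. 0)) \<longrightarrow> f x = 0"
      and W: "W \<in> LP d U D" for f W
  proof -
    have fin: "finite (Collect (bad d U D W'))" if "W' \<in> LP d U D" for W'
    proof -
      have "Collect (bad d U D W') \<subseteq> {a..<b}" using bad_range[OF that _ injR injL] by auto
      then show ?thesis by (rule finite_subset) simp
    qed
    have "\<forall>W. W \<in> LP d U D \<longrightarrow> card (Collect (bad d U D W)) = n \<longrightarrow>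
            (\<forall>x. (\<forall>i\<in>{a..b}. x i \<in> W i \<and> x i \<noteq> (\<lambda>n. 0)) \<longrightarrow> f x = 0)" for n
    proof (induct n rule: less_induct)
      case (less n)
      show ?case
      proof (rule allI, intro impI)
        fix W assume W: "W \<in> LP d U D" and cn: "card (Collect (bad d U D W)) = n"
        show "\<forall>x. (\<forall>i\<in>{a..b}. x i \<in> W i \<and> x i \<noteq> (\<lambda>n. 0)) \<longrightarrow> f x = 0"
        proof (cases "Collect (bad d U D W) = {}")
          case True
          then have "exact_on W (up_map d U) (down_map d D)" using exact_iff_nobad[OF col W] by auto
          then have "W \<in> LP_exact d U D" using W by (simp add: LP_exact_def)
          then show ?thesis using van by blast
        next
          case False
          define i0 where "i0 = Max (Collect (bad d U D W))"
          have bd: "bad d U D W i0" using Max_in[OF fin[OF W] False] by (simp add: i0_def)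
          have nb: "\<forall>j>i0. \<not> bad d U D W j" using Max_ge[OF fin[OF W]] by (force simp: i0_def)
          show ?thesis
          proof (rule curve_step[OF col ex3 inf W bd nb mh])
            show "\<forall>W'\<in>LP d U D. (\<forall>j. bad d U D W' j \<longrightarrow> bad d U D W j \<and> j \<noteq> i0) \<longrightarrow>
               (\<forall>x. (\<forall>i\<in>{a..b}. x i \<in> W' i \<and> x i \<noteq> (\<lambda>n. 0)) \<longrightarrow> f x = 0)"
            proof (intro ballI impI)
              fix W' assume W': "W' \<in> LP d U D" and sub: "\<forall>j. bad d U D W' j \<longrightarrow> bad d U D W j \<and> j \<noteq> i0"
              have "Collect (bad d U D W') \<subset> Collect (bad d U D W)" using sub bd by auto
              then have "card (Collect (bad d U D W')) < n" using psubset_card_mono[OF fin[OF W]] cn by blast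
              then show "\<forall>x. (\<forall>i\<in>{a..b}. x i \<in> W' i \<and> x i \<noteq> (\<lambda>n. 0)) \<longrightarrow> f x = 0"
                using less W' by blast
            qed
          qed
        qed
      qed
    qed
    then show ?thesis using W by blast
  qed
  show ?thesis
    unfolding zariski_dense_in_def
  proof (intro allI impI)
    fix C assume "zariski_closed_in {a..b} d (LP d U D) C \<and> LP_exact d U D \<subseteq> C"
    then obtain F where F: "\<forall>f\<in>F. multihom {a..b} d f"
      "C = {W \<in> LP d U D. \<forall>f\<in>F. \<forall>x. (\<forall>i\<in>{a..b}. x i \<in> W i \<and> x i \<noteq> (\<lambda>n. 0)) \<longrightarrow> f x = 0}"
      and sub: "LP_exact d U D \<subseteq> C"
      unfolding zariski_closed_in_def by blast
    have van: "\<forall>W'\<in>LP_exact d U D. \<forall>x. (\<forall>i\<in>{a..b}. x i \<in> W' i \<and> x i \<noteq> (\<lambda>n. 0)) \<longrightarrow> f x = 0"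
      if "f \<in> F" for f
      using sub that unfolding F(2) by blast
    show "C = LP d U D"
      unfolding F(2) using main F(1) van by blast
  qed
qed

theorem proposition3p10:
  fixes d :: "int \<Rightarrow> nat" and U D :: "int \<Rightarrow> nat \<Rightarrow> nat \<Rightarrow> 'k::field"
  assumes "colinked_chain d U D"
    and "exact_rep d U D"
    and "\<exists>H. finite H \<and> is_cosupport d U D H"
  shows "\<forall>H. finite_interval H \<and> is_cosupport d U D H \<longrightarrow>
           zariski_open_in H d (LP d (base_change U) (base_change D))
                                (LP_exact d (base_change U) (base_change D))
         \<and> zariski_dense_in H d (LP d (base_change U) (base_change D))
                                (LP_exact d (base_change U) (base_change D))"
proof (intro allI impI)
  fix H assume H: "finite_interval H \<and> is_cosupport d U D H"
  then obtain a b where Hab: "H = {a..b}" unfolding finite_interval_def by blast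
  have cos: "is_cosupport d U D H" using H by blast
  have col: "colinked_chain d (base_change U) (base_change D)" by (rule colinked_bc[OF assms(1)])
  have ex3: "\<forall>i. \<forall>x\<in>cspace d i. up_map d (base_change U) i x = (\<lambda>_. 0) \<longrightarrow>
      x \<in> down_map d (base_change D) i ` cspace d (i+1)"
    using exact_bc[OF assms(2)] by blast
  have inf: "infinite (UNIV :: 'k alg_closure set)" by (rule alg_closed_infinite)
  have injR: "\<forall>j\<ge>b. inj_on (down_map d (base_change D) j) (cspace d (j+1))"
  proof (intro allI impI)
    fix j assume j: "b \<le> j"
    have "inj_on (down_map d D j) (cspace d (j+1))"
      by (rule cos_right[OF cos _ j]) (simp add: Hab)
    then have "inj_on (mat_apply (D j) (d (j+1)) (d j)) (csp (d (j+1)))"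
      by (simp add: down_map_def cspace_csp)
    from inj_KT[OF this] show "inj_on (down_map d (base_change D) j) (cspace d (j+1))"
      by (simp add: down_bc cspace_csp)
  qed
  have injL: "\<forall>j<a. inj_on (up_map d (base_change U) j) (cspace d j)"
  proof (intro allI impI)
    fix j assume j: "j < a"
    have "inj_on (up_map d U j) (cspace d j)"
      by (rule cos_left[OF cos _ j]) (simp add: Hab)
    then have "inj_on (mat_apply (U j) (d j) (d (j+1))) (csp (d j))"
      by (simp add: up_map_def cspace_csp)
    from inj_KT[OF this] show "inj_on (up_map d (base_change U) j) (cspace d j)"
      by (simp add: up_bc cspace_csp)
  qed
  show "zariski_open_in H d (LP d (base_change U) (base_change D)) (LP_exact d (base_change U) (base_change D))
      \<and> zariski_dense_in H d (LP d (base_change U) (base_change D)) (LP_exact d (base_change U) (base_change D))"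
    unfolding Hab using open_part[OF col injR injL] dense_part[OF col ex3 inf injR injL] by blast
qed

end
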